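(* Let $i,j\geq0$, let $R=(\gamma_{\mathrm{low}},\gamma_{\mathrm{mid}},\gamma_{\mathrm{up}})\in\mathcal{R}_{i,j}$, and let $A$ be its blue-red arc diagram. Then $R\in\mathcal{G}_{i,j}$ if and only if $A$ has no Z-pattern.
   Context: Walks are words on $\{N,E\}$, viewed as lattice paths from $(0,0)$ with steps $N=(0,1)$, $E=(1,0)$. For walks $\gamma,\gamma'$, $\gamma'$ is above $\gamma$ if same endpoint and no East step of $\gamma$ lies strictly above the East step of $\gamma'$ in the same column. For $\nu$ ending at $(i,j)$, $\mathcal{W}_\nu$ is the set of walks above $\nu$. For $\gamma\in\mathcal{W}_\nu$ and a point $p=(x,y)$ on $\gamma$, let $x'$ be the abscissa of the North step of $\nu$ from ordinate $y$ to $y+1$ ($x'=i$ if $y=j$), $\ell(p)=x'-x$; if $p$ is preceded by $E$ and followed by $N$, let $p'$ be the next point after $p$ along $\gamma$ with $\ell(p')=\ell(p)$ and $\mathrm{push}_p(\gamma)$ the walk obtained by moving the $E$ preceding $p$ to just after $p'$. $\mathrm{Tam}(\nu)$ is the order on $\mathcal{W}_\nu$ given by the reflexive-transitive closure of $\gamma\le\mathrm{push}_p(\gamma)$. $\mathcal{R}_{i,j}$ is the set of triples $(\nu,\gamma,\gamma')$ of walks ending at $(i,j)$ with $\gamma'$ above $\gamma$ and $\gamma$ above $\nu$; $\mathcal{G}_{i,j}$ is the set of triples with $\nu$ ending at $(i,j)$, $\gamma,\gamma'\in\mathcal{W}_\nu$ and $\gamma\le\gamma'$ in $\mathrm{Tam}(\nu)$.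 Blue-red arc diagram of $(\gamma_{\mathrm{low}},\gamma_{\mathrm{mid}},\gamma_{\mathrm{up}})\in\mathcal{R}_{i,j}$: for $r=0,\dots,j$ let $\alpha_r,\mu_r,\beta_r$ be the numbers of East steps at height $r$ of $\gamma_{\mathrm{low}},\gamma_{\mathrm{mid}},\gamma_{\mathrm{up}}$. Place on a line, for $r=0,\dots,j$ successively, $\alpha_r$ blue dots, then $\mu_r$ black dots, then $\beta_r$ red dots. Below the line, blue dots are matched to black dots by the non-crossing matching where each arc has a blue left end and a black right end; above the line, black dots are matched to red dots by the non-crossing matching where each arc has a black left end and a red right end (these exist since each walk is above the previous one). A Z-pattern is a pair of a lower arc $a$ (blue dot $d_1$, black dot $d_3$) and an upper arc $a'$ (black dot $d_0$, red dot $d_2$) with $d_0<d_1<d_2<d_3$ along the line, i.e. the blue end of $a$ is enclosed within $a'$ and the red end of $a'$ is enclosed within $a$. *)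

theory Defs
  imports Main
begin

datatype step = N | E

type_synonym walk = "step list"

definition cntE :: "walk \<Rightarrow> nat" where
  "cntE w = length (filter (\<lambda>s. s = E) w)"

definition cntN :: "walk \<Rightarrow> nat" where
  "cntN w = length (filter (\<lambda>s. s = N) w)"

definition endpt :: "walk \<Rightarrow> nat \<times> nat" where
  "endpt w = (cntE w, cntN w)"

text \<open>The k-th point visited by the walk (k = 0 .. length w).\<close>
definition pt :: "walk \<Rightarrow> nat \<Rightarrow> nat \<times> nat" where
  "pt w k = (cntE (take k w), cntN (take k w))"

text \<open>above g' g: g' is above g. The East step with index k starts at
  point pt w k; its column is the abscissa, its height the ordinate.\<close>
definition above :: "walk \<Rightarrow> walk \<Rightarrow> bool" where
  "above g' g \<longleftrightarrow> endpt g' = endpt g \<and>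
     \<not> (\<exists>k k'. k < length g \<and> k' < length g' \<and> g ! k = E \<and> g' ! k' = E \<and>
          cntE (take k g) = cntE (take k' g') \<and> cntN (take k g) > cntN (take k' g'))"

definition Wset :: "walk \<Rightarrow> walk set" where
  "Wset \<nu> = {g. above g \<nu>}"

text \<open>Abscissa x' of the North step of nu from ordinate y to y+1 (x' = i if y = j).\<close>
definition nabs :: "walk \<Rightarrow> nat \<Rightarrow> nat" where
  "nabs \<nu> y = (if y = cntN \<nu> then cntE \<nu>
     else cntE (take (THE k. k < length \<nu> \<and> \<nu> ! k = N \<and> cntN (take k \<nu>) = y) \<nu>))"

definition ldist :: "walk \<Rightarrow> nat \<times> nat \<Rightarrow> int" where
  "ldist \<nu> p = int (nabs \<nu> (snd p)) - int (fst p)"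

text \<open>Moving the East step preceding point number k to just after point number k'.\<close>
definition push_word :: "walk \<Rightarrow> nat \<Rightarrow> nat \<Rightarrow> walk" where
  "push_word g k k' = take (k - 1) g @ take (k' - k) (drop k g) @ [E] @ drop k' g"

text \<open>One push step: p = point number k of g, preceded by E and followed by N;
  p' = point number k' is the next point after p along g with l(p') = l(p).\<close>
definition tam_step :: "walk \<Rightarrow> walk \<Rightarrow> walk \<Rightarrow> bool" where
  "tam_step \<nu> g g' \<longleftrightarrow> g \<in> Wset \<nu> \<and>
     (\<exists>k k'. 0 < k \<and> k < length g \<and> g ! (k - 1) = E \<and> g ! k = N \<and>
        k < k' \<and> k' \<le> length g \<and> ldist \<nu> (pt g k') = ldist \<nu> (pt g k) \<and>
        (\<forall>m. k < m \<and> m < k' \<longrightarrow> ldist \<nu> (pt g m) \<noteq> ldist \<nu> (pt g k)) \<and>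
        g' = push_word g k k')"

definition tam_le :: "walk \<Rightarrow> walk \<Rightarrow> walk \<Rightarrow> bool" where
  "tam_le \<nu> = (tam_step \<nu>)\<^sup>*\<^sup>*"

definition Rset :: "nat \<Rightarrow> nat \<Rightarrow> (walk \<times> walk \<times> walk) set" where
  "Rset i j = {(\<nu>, g, g'). endpt \<nu> = (i, j) \<and> endpt g = (i, j) \<and> endpt g' = (i, j) \<and>
       above g' g \<and> above g \<nu>}"

definition Gset :: "nat \<Rightarrow> nat \<Rightarrow> (walk \<times> walk \<times> walk) set" where
  "Gset i j = {(\<nu>, g, g'). endpt \<nu> = (i, j) \<and> g \<in> Wset \<nu> \<and> g' \<in> Wset \<nu> \<and> tam_le \<nu> g g'}"

datatype colour = Blue | Black | Red

definition east_at :: "walk \<Rightarrow> nat \<Rightarrow> nat" where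
  "east_at w r = card {k. k < length w \<and> w ! k = E \<and> cntN (take k w) = r}"

definition dots :: "nat \<Rightarrow> walk \<Rightarrow> walk \<Rightarrow> walk \<Rightarrow> colour list" where
  "dots j lo mid up = concat (map (\<lambda>r. replicate (east_at lo r) Blue @
        replicate (east_at mid r) Black @ replicate (east_at up r) Red) [0..<Suc j])"

definition nc_matching :: "colour list \<Rightarrow> colour \<Rightarrow> colour \<Rightarrow> (nat \<times> nat) set \<Rightarrow> bool" where
  "nc_matching cs L R M \<longleftrightarrow>
     (\<forall>(a, b) \<in> M. a < b \<and> b < length cs \<and> cs ! a = L \<and> cs ! b = R) \<and>
     (\<forall>d < length cs. (cs ! d = L \<or> cs ! d = R) \<longrightarrow>
          card {e \<in> M. fst e = d \<or> snd e = d} = 1) \<and>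
     (\<forall>(a, b) \<in> M. \<forall>(c, d) \<in> M. \<not> (a < c \<and> c < b \<and> b < d))"

definition lower_arcs :: "nat \<Rightarrow> walk \<Rightarrow> walk \<Rightarrow> walk \<Rightarrow> (nat \<times> nat) set" where
  "lower_arcs j lo mid up = (THE M. nc_matching (dots j lo mid up) Blue Black M)"

definition upper_arcs :: "nat \<Rightarrow> walk \<Rightarrow> walk \<Rightarrow> walk \<Rightarrow> (nat \<times> nat) set" where
  "upper_arcs j lo mid up = (THE M. nc_matching (dots j lo mid up) Black Red M)"

definition has_Z_pattern :: "nat \<Rightarrow> walk \<Rightarrow> walk \<Rightarrow> walk \<Rightarrow> bool" where
  "has_Z_pattern j lo mid up \<longleftrightarrow>
     (\<exists>d0 d1 d2 d3. (d1, d3) \<in> lower_arcs j lo mid up \<and> (d0, d2) \<in> upper_arcs j lo mid up \<and>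
        d0 < d1 \<and> d1 < d2 \<and> d2 < d3)"

end

theory Submission
  imports Defs
begin

lemma cntE_simps[simp]:
  "cntE [] = 0" "cntE (E # w) = Suc (cntE w)" "cntE (N # w) = cntE w"
  "cntE (u @ v) = cntE u + cntE v"
  by (auto simp: cntE_def)

lemma cntN_simps[simp]:
  "cntN [] = 0" "cntN (N # w) = Suc (cntN w)" "cntN (E # w) = cntN w"
  "cntN (u @ v) = cntN u + cntN v"
  by (auto simp: cntN_def)

fun ec :: "walk \<Rightarrow> nat \<Rightarrow> nat" where
  "ec [] r = 0"
| "ec (E # w) r = Suc (ec w r)"
| "ec (N # w) r = (case r of 0 \<Rightarrow> 0 | Suc r' \<Rightarrow> ec w r')"

lemma ec_append:
  "ec (u @ v) r = ec u r + (if cntN u \<le> r then ec v (r - cntN u) else 0)"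
proof (induction u arbitrary: r)
  case Nil then show ?case by simp
next
  case (Cons x u)
  then show ?case by (cases x; cases r; auto)
qed

lemma ec_mono: "r \<le> r' \<Longrightarrow> ec w r \<le> ec w r'"
proof (induction w arbitrary: r r')
  case Nil then show ?case by simp
next
  case (Cons x w)
  then show ?case by (cases x; cases r; cases r'; auto)
qed

lemma ec_full: "cntN w \<le> r \<Longrightarrow> ec w r = cntE w"
proof (induction w arbitrary: r)
  case Nil then show ?case by simp
next
  case (Cons x w)
  then show ?case by (cases x; cases r; auto)
qed

lemma ec_le: "ec w r \<le> cntE w"
proof (induction w arbitrary: r)
  case Nil then show ?case by simp
next
  case (Cons x w)
  then show ?case by (cases x; cases r; auto)
qed

fun hs :: "walk \<Rightarrow> nat list" where
  "hs [] = []"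
| "hs (E # w) = 0 # hs w"
| "hs (N # w) = map Suc (hs w)"

lemma length_hs[simp]: "length (hs w) = cntE w"
  by (induction w rule: hs.induct) auto

lemma sorted_hs: "sorted (hs w)"
  by (induction w rule: hs.induct) (auto simp: sorted_map)

lemma ec_hs: "ec w r = length (filter (\<lambda>h. h \<le> r) (hs w))"
proof (induction w arbitrary: r)
  case Nil then show ?case by simp
next
  case (Cons x w)
  then show ?case by (cases x; cases r; auto simp: filter_map o_def)
qed

lemma hs_nth: "k < length w \<Longrightarrow> w ! k = E \<Longrightarrow> hs w ! cntE (take k w) = cntN (take k w)"
proof (induction w arbitrary: k)
  case Nil then show ?case by simp
next
  case (Cons x w)
  show ?case
  proof (cases k)
    case 0 then show ?thesis using Cons by (cases x) auto
  next
    case (Suc k')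
    then have k': "k' < length w" "w ! k' = E" using Cons.prems by auto
    have lt: "cntE (take k' w) < cntE w"
    proof -
      have "take (Suc k') w = take k' w @ [w ! k']" using k' by (simp add: take_Suc_conv_app_nth)
      moreover have "cntE (take (Suc k') w) \<le> cntE w"
        by (metis append_take_drop_id cntE_simps(4) le_add1)
      ultimately show ?thesis using k' by simp
    qed
    show ?thesis using Cons.IH[OF k'] Suc lt by (cases x) auto
  qed
qed

lemma col_exists: "c < cntE w \<Longrightarrow> \<exists>k<length w. w ! k = E \<and> cntE (take k w) = c"
proof (induction w arbitrary: c)
  case Nil then show ?case by simp
next
  case (Cons x w)
  show ?case
  proof (cases x)
    case N
    then obtain k where "k < length w" "w ! k = E" "cntE (take k w) = c" using Cons by auto
    then show ?thesis using N by (intro exI[of _ "Suc k"]) auto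
  next
    case E
    show ?thesis
    proof (cases c)
      case 0 then show ?thesis using E by (intro exI[of _ 0]) auto
    next
      case (Suc c')
      then obtain k where "k < length w" "w ! k = E" "cntE (take k w) = c'" using Cons E by auto
      then show ?thesis using E Suc by (intro exI[of _ "Suc k"]) auto
    qed
  qed
qed

lemma cntE_take_le: "cntE (take k w) \<le> cntE w"
  by (metis append_take_drop_id cntE_simps(4) le_add1)
lemma cntN_take_le: "cntN (take k w) \<le> cntN w"
  by (metis append_take_drop_id cntN_simps(4) le_add1)

lemma cntE_take_mono: "k1 \<le> k2 \<Longrightarrow> cntE (take k1 w) \<le> cntE (take k2 w)"
  by (metis cntE_take_le min.absorb1 take_take)
lemma cntN_take_mono: "k1 \<le> k2 \<Longrightarrow> cntN (take k1 w) \<le> cntN (take k2 w)"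
  by (metis cntN_take_le min.absorb1 take_take)

lemma take_Suc_E: "k < length w \<Longrightarrow> w ! k = E \<Longrightarrow>
   cntE (take (Suc k) w) = Suc (cntE (take k w)) \<and> cntN (take (Suc k) w) = cntN (take k w)"
  by (simp add: take_Suc_conv_app_nth)
lemma take_Suc_N: "k < length w \<Longrightarrow> w ! k = N \<Longrightarrow>
   cntE (take (Suc k) w) = cntE (take k w) \<and> cntN (take (Suc k) w) = Suc (cntN (take k w))"
  by (simp add: take_Suc_conv_app_nth)

lemma above_hs:
  "above g' g \<longleftrightarrow> endpt g' = endpt g \<and> (\<forall>c < cntE g. hs g ! c \<le> hs g' ! c)"
proof
  assume a: "above g' g"
  then have ep: "endpt g' = endpt g" by (simp add: above_def)
  have "hs g ! c \<le> hs g' ! c" if c: "c < cntE g" for c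
  proof (rule ccontr)
    assume "\<not> ?thesis"
    obtain k where k: "k < length g" "g ! k = E" "cntE (take k g) = c" using col_exists c by blast
    have "c < cntE g'" using ep c by (simp add: endpt_def)
    then obtain k' where k': "k' < length g'" "g' ! k' = E" "cntE (take k' g') = c" using col_exists by blast
    have "hs g ! c = cntN (take k g)" using hs_nth[OF k(1,2)] k(3) by simp
    moreover have "hs g' ! c = cntN (take k' g')" using hs_nth[OF k'(1,2)] k'(3) by simp
    ultimately have "cntN (take k' g') < cntN (take k g)" using \<open>\<not> _\<close> by simp
    then have "\<exists>k k'. k < length g \<and> k' < length g' \<and> g ! k = E \<and> g' ! k' = E \<and>
          cntE (take k g) = cntE (take k' g') \<and> cntN (take k g) > cntN (take k' g')"
      using k k' by (intro exI[of _ k] exI[of _ k']) simp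
    then show False using a unfolding above_def by blast
  qed
  then show "endpt g' = endpt g \<and> (\<forall>c < cntE g. hs g ! c \<le> hs g' ! c)" using ep by blast
next
  assume b: "endpt g' = endpt g \<and> (\<forall>c < cntE g. hs g ! c \<le> hs g' ! c)"
  show "above g' g" unfolding above_def
  proof (intro conjI notI)
    show "endpt g' = endpt g" using b by blast
  next
    assume "\<exists>k k'. k < length g \<and> k' < length g' \<and> g ! k = E \<and> g' ! k' = E \<and>
          cntE (take k g) = cntE (take k' g') \<and> cntN (take k' g') < cntN (take k g)"
    then obtain k k' where kk: "k < length g" "k' < length g'" "g ! k = E" "g' ! k' = E"
          "cntE (take k g) = cntE (take k' g')" "cntN (take k' g') < cntN (take k g)" by blast
    have "cntE (take (Suc k) g) \<le> cntE g" by (rule cntE_take_le)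
    then have c: "cntE (take k g) < cntE g" using take_Suc_E[OF kk(1,3)] by simp
    have "hs g ! cntE (take k g) = cntN (take k g)" using hs_nth kk by blast
    moreover have "hs g' ! cntE (take k g) = cntN (take k' g')" using hs_nth kk by metis
    moreover have "hs g ! cntE (take k g) \<le> hs g' ! cntE (take k g)" using b c by blast
    ultimately show False using kk(6) by simp
  qed
qed

lemma sorted_cmp:
  fixes xs ys :: "nat list"
  assumes "sorted xs" "sorted ys" "length xs = length ys"
  shows "(\<forall>c<length xs. xs ! c \<le> ys ! c) \<longleftrightarrow>
         (\<forall>r. length (filter (\<lambda>h. h \<le> r) ys) \<le> length (filter (\<lambda>h. h \<le> r) xs))"
proof
  assume h: "\<forall>c<length xs. xs ! c \<le> ys ! c"
  show "\<forall>r. length (filter (\<lambda>h. h \<le> r) ys) \<le> length (filter (\<lambda>h. h \<le> r) xs)"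
  proof
    fix r
    have "{i. i < length ys \<and> ys ! i \<le> r} \<subseteq> {i. i < length xs \<and> xs ! i \<le> r}"
    proof
      fix i assume i: "i \<in> {i. i < length ys \<and> ys ! i \<le> r}"
      then have il: "i < length xs" using assms(3) by simp
      then have "xs ! i \<le> ys ! i" using h by blast
      then show "i \<in> {i. i < length xs \<and> xs ! i \<le> r}" using i il by simp
    qed
    then show "length (filter (\<lambda>h. h \<le> r) ys) \<le> length (filter (\<lambda>h. h \<le> r) xs)"
      by (simp add: length_filter_conv_card card_mono)
  qed
next
  assume h: "\<forall>r. length (filter (\<lambda>h. h \<le> r) ys) \<le> length (filter (\<lambda>h. h \<le> r) xs)"
  show "\<forall>c<length xs. xs ! c \<le> ys ! c"
  proof (intro allI impI; rule ccontr)
    fix c assume c: "c < length xs" and n: "\<not> xs ! c \<le> ys ! c"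
    define r where "r = ys ! c"
    have cy: "c < length ys" using c assms(3) by simp
    have sub1: "{..c} \<subseteq> {i. i < length ys \<and> ys ! i \<le> r}"
    proof
      fix i assume "i \<in> {..c}"
      then have ic: "i \<le> c" by simp
      have "ys ! i \<le> ys ! c" using sorted_nth_mono[OF assms(2) ic cy] .
      then show "i \<in> {i. i < length ys \<and> ys ! i \<le> r}" using ic cy r_def by simp
    qed
    have 1: "Suc c \<le> card {i. i < length ys \<and> ys ! i \<le> r}"
    proof -
      have "card {..c} \<le> card {i. i < length ys \<and> ys ! i \<le> r}"
        by (rule card_mono[OF _ sub1]) simp
      then show ?thesis by simp
    qed
    have sub2: "{i. i < length xs \<and> xs ! i \<le> r} \<subseteq> {..<c}"
    proof
      fix i assume i: "i \<in> {i. i < length xs \<and> xs ! i \<le> r}"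
      show "i \<in> {..<c}"
      proof (rule ccontr)
        assume "i \<notin> {..<c}"
        then have "c \<le> i" by simp
        then have "xs ! c \<le> xs ! i" using i sorted_nth_mono[OF assms(1)] by simp
        then show False using i n r_def by simp
      qed
    qed
    have 2: "card {i. i < length xs \<and> xs ! i \<le> r} \<le> c"
    proof -
      have "card {i. i < length xs \<and> xs ! i \<le> r} \<le> card {..<c}"
        by (rule card_mono[OF _ sub2]) simp
      then show ?thesis by simp
    qed
    from h[rule_format, of r] 1 2 show False by (simp add: length_filter_conv_card)
  qed
qed

lemma above_ec:
  "above g' g \<longleftrightarrow> endpt g' = endpt g \<and> (\<forall>r. ec g' r \<le> ec g r)"
proof -
  have "endpt g' = endpt g \<Longrightarrow> length (hs g) = length (hs g')" by (simp add: endpt_def)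
  then show ?thesis
    using sorted_cmp[OF sorted_hs[of g] sorted_hs[of g']] unfolding above_hs ec_hs
    by (metis length_hs)
qed


lemma east_at_Nil: "east_at [] r = 0"
  by (simp add: east_at_def)

lemma east_at_Cons:
  "east_at (x # w) r = (if x = E \<and> r = 0 then 1 else 0) +
      card {k. k < length w \<and> w ! k = E \<and> cntN (take k w) + (if x = N then 1 else 0) = r}"
proof -
  let ?A = "{k. k < length (x # w) \<and> (x # w) ! k = E \<and> cntN (take k (x # w)) = r}"
  let ?B = "{k. k < length w \<and> w ! k = E \<and> cntN (take k w) + (if x = N then 1 else 0) = r}"
  have eq: "?A = (if x = E \<and> r = 0 then {0} else {}) \<union> Suc ` ?B"
  proof (intro equalityI subsetI)
    fix k assume k: "k \<in> ?A"
    show "k \<in> (if x = E \<and> r = 0 then {0} else {}) \<union> Suc ` ?B"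
    proof (cases k)
      case 0 then show ?thesis using k by (cases x) auto
    next
      case (Suc k') then show ?thesis using k by (cases x) auto
    qed
  next
    fix k assume k: "k \<in> (if x = E \<and> r = 0 then {0} else {}) \<union> Suc ` ?B"
    then show "k \<in> ?A" by (cases x) (auto split: if_splits)
  qed
  have "finite ?B" by simp
  moreover have "0 \<notin> Suc ` ?B" by auto
  ultimately have "card ?A = (if x = E \<and> r = 0 then 1 else 0) + card ?B"
    unfolding eq by (simp add: card_image)
  then show ?thesis by (simp add: east_at_def)
qed

lemma east_at_E: "east_at (E # w) r = (if r = 0 then 1 else 0) + east_at w r"
proof -
  have "east_at (E # w) r = (if r = 0 then 1 else 0) +
      card {k. k < length w \<and> w ! k = E \<and> cntN (take k w) = r}"
    using east_at_Cons[of E w r] by simp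
  then show ?thesis by (simp add: east_at_def)
qed

lemma east_at_N: "east_at (N # w) r = (case r of 0 \<Rightarrow> 0 | Suc r' \<Rightarrow> east_at w r')"
proof -
  have "east_at (N # w) r = card {k. k < length w \<and> w ! k = E \<and> Suc (cntN (take k w)) = r}"
    using east_at_Cons[of N w r] by simp
  then show ?thesis by (cases r) (simp_all add: east_at_def)
qed

lemma east_at_ec: "east_at w r + (case r of 0 \<Rightarrow> 0 | Suc r' \<Rightarrow> ec w r') = ec w r"
proof (induction w arbitrary: r)
  case Nil then show ?case by (simp add: east_at_Nil split: nat.split)
next
  case (Cons x w)
  show ?case
  proof (cases x)
    case E then show ?thesis using Cons[of r] by (cases r) (auto simp: east_at_E)
  next
    case N then show ?thesis
    proof (cases r)
      case 0 then show ?thesis using N by (simp add: east_at_N)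
    next
      case (Suc r') then show ?thesis using N Cons[of r'] by (cases r') (auto simp: east_at_N)
    qed
  qed
qed

lemma sum_east_at: "(\<Sum>q<Suc s. east_at w q) = ec w s"
proof (induction s)
  case 0 then show ?case using east_at_ec[of w 0] by simp
next
  case (Suc s) then show ?case using east_at_ec[of w "Suc s"] by simp
qed

lemma Nidx: "y < cntN w \<Longrightarrow> \<exists>k<length w. w ! k = N \<and> cntN (take k w) = y"
proof (induction w arbitrary: y)
  case Nil then show ?case by simp
next
  case (Cons x w)
  show ?case
  proof (cases x)
    case E
    then obtain k where "k < length w" "w ! k = N" "cntN (take k w) = y" using Cons by auto
    then show ?thesis using E by (intro exI[of _ "Suc k"]) auto
  next
    case N
    show ?thesis
    proof (cases y)
      case 0 then show ?thesis using N by (intro exI[of _ 0]) auto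
    next
      case (Suc y')
      then obtain k where "k < length w" "w ! k = N" "cntN (take k w) = y'" using Cons N by auto
      then show ?thesis using N Suc by (intro exI[of _ "Suc k"]) auto
    qed
  qed
qed

lemma ec_lead: "ec (u @ v) (cntN u) = cntE u + ec v 0"
  by (simp add: ec_append ec_full)

lemma ec_Nhead: "ec (N # v) 0 = 0" by simp

lemma N_end: "k < length w \<Longrightarrow> w ! k = N \<Longrightarrow> cntE (take k w) = ec w (cntN (take k w))"
proof -
  assume k: "k < length w" "w ! k = N"
  have "drop k w = N # drop (Suc k) w" using k by (metis Cons_nth_drop_Suc)
  have "ec w (cntN (take k w)) = ec (take k w @ drop k w) (cntN (take k w))" by simp
  also have "\<dots> = cntE (take k w) + ec (drop k w) 0" by (rule ec_lead)
  finally have "ec w (cntN (take k w)) = cntE (take k w) + 0"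
    using \<open>drop k w = _\<close> by simp
  then show ?thesis by simp
qed

lemma pos_le: "cntE (take k w) \<le> ec w (cntN (take k w))"
proof -
  have "ec w (cntN (take k w)) = ec (take k w @ drop k w) (cntN (take k w))" by simp
  also have "\<dots> = cntE (take k w) + ec (drop k w) 0" by (rule ec_lead)
  finally show ?thesis by simp
qed

lemma end_pt: "cntE w = ec w (cntN w)"
  by (simp add: ec_full)

lemma N_strict: "k1 < k2 \<Longrightarrow> k1 < length w \<Longrightarrow> w ! k1 = N \<Longrightarrow>
   cntN (take k1 w) < cntN (take k2 w)"
proof -
  assume a: "k1 < k2" "k1 < length w" "w ! k1 = N"
  have "cntN (take (Suc k1) w) = Suc (cntN (take k1 w))" using take_Suc_N[OF a(2,3)] by simp
  moreover have "cntN (take (Suc k1) w) \<le> cntN (take k2 w)" using a(1) cntN_take_mono by simp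
  ultimately show ?thesis by simp
qed

lemma nabs_ec: "y \<le> cntN \<nu> \<Longrightarrow> nabs \<nu> y = ec \<nu> y"
proof (cases "y = cntN \<nu>")
  case True then show ?thesis by (simp add: nabs_def ec_full)
next
  case False
  assume "y \<le> cntN \<nu>"
  then have y: "y < cntN \<nu>" using False by simp
  let ?P = "\<lambda>k. k < length \<nu> \<and> \<nu> ! k = N \<and> cntN (take k \<nu>) = y"
  have ex: "\<exists>!k. ?P k"
  proof -
    obtain k where k: "?P k" using Nidx[OF y] by blast
    have "k' = k" if "?P k'" for k'
    proof (rule ccontr)
      assume "k' \<noteq> k"
      then have "k' < k \<or> k < k'" by arith
      then show False
      proof
        assume "k' < k" then show False using N_strict[of k' k \<nu>] that k by simp
      next
        assume "k < k'" then show False using N_strict[of k k' \<nu>] that k by simp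
      qed
    qed
    then show ?thesis using k by blast
  qed
  have P: "?P (THE k. ?P k)" using theI'[OF ex] .
  have "nabs \<nu> y = cntE (take (THE k. ?P k) \<nu>)" using False by (simp add: nabs_def)
  also have "\<dots> = ec \<nu> y" using N_end[of "THE k. ?P k" \<nu>] P by simp
  finally show ?thesis .
qed


definition Fw :: "walk \<Rightarrow> walk \<Rightarrow> nat \<Rightarrow> int" where
  "Fw \<nu> w r = int (ec \<nu> r) - int (ec w r)"

definition pushrel :: "(nat \<Rightarrow> int) \<Rightarrow> nat \<Rightarrow> nat \<Rightarrow> (nat \<Rightarrow> int) \<Rightarrow> bool" where
  "pushrel f y y' f' \<longleftrightarrow> y < y' \<and> (\<forall>s. y < s \<and> s < y' \<longrightarrow> f y < f s) \<and> f y' \<le> f y \<and>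
     f' = (\<lambda>r. if y \<le> r \<and> r < y' then f r + 1 else f r)"

lemma push_decomp:
  assumes "0 < k" "k \<le> k'" "k' \<le> length g" "g ! (k-1) = E"
  shows "g = take (k-1) g @ [E] @ take (k'-k) (drop k g) @ drop k' g"
proof -
  have "drop (k-1) g = g ! (k-1) # drop k g"
    using assms by (metis Cons_nth_drop_Suc Suc_diff_1 le_less_trans less_le_trans diff_less zero_less_one)
  moreover have "drop k g = take (k'-k) (drop k g) @ drop k' g"
    using assms(2) by (metis append_take_drop_id drop_drop le_add_diff_inverse2)
  ultimately show ?thesis using assms(4) by (metis append_Cons append_Nil append_take_drop_id)
qed

lemma push_ec:
  assumes "0 < k" "k \<le> k'" "k' \<le> length g" "g ! (k-1) = E"
  shows "int (ec (push_word g k k') r) =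
           int (ec g r) - (if cntN (take k g) \<le> r \<and> r < cntN (take k' g) then 1 else 0)"
    and "cntE (push_word g k k') = cntE g" and "cntN (push_word g k k') = cntN g"
proof -
  define A where "A = take (k-1) g"
  define B where "B = take (k'-k) (drop k g)"
  define C where "C = drop k' g"
  have g: "g = A @ [E] @ B @ C" using push_decomp[OF assms] A_def B_def C_def by simp
  have pw: "push_word g k k' = A @ B @ [E] @ C" by (simp add: push_word_def A_def B_def C_def)
  have lA: "length A = k - 1" using assms A_def by simp
  have lB: "length B = k' - k" using assms B_def by simp
  have tk: "take k g = A @ [E]"
  proof -
    have "k = length (A @ [E])" using lA assms by simp
    then show ?thesis by (metis g append.assoc append_eq_conv_conj)
  qed
  have tk': "take k' g = A @ [E] @ B"
  proof -
    have "k' = length (A @ [E] @ B)" using lA lB assms by simp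
    then show ?thesis by (metis g append.assoc append_eq_conv_conj)
  qed
  have y: "cntN (take k g) = cntN A" using tk by simp
  have y': "cntN (take k' g) = cntN A + cntN B" using tk' by simp
  show "int (ec (push_word g k k') r) =
           int (ec g r) - (if cntN (take k g) \<le> r \<and> r < cntN (take k' g) then 1 else 0)"
    unfolding pw y y' by (subst g, simp add: ec_append, arith)
  show "cntE (push_word g k k') = cntE g" unfolding pw by (subst g) simp
  show "cntN (push_word g k k') = cntN g" unfolding pw by (subst g) simp
qed

lemma L_eq:
  assumes "cntN g = cntN \<nu>"
  shows "ldist \<nu> (pt g m) = int (ec \<nu> (cntN (take m g))) - int (cntE (take m g))"
proof -
  have "cntN (take m g) \<le> cntN \<nu>" using assms cntN_take_le by metis
  then show ?thesis by (simp add: ldist_def pt_def nabs_ec)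
qed

lemma L_E:
  assumes "cntN g = cntN \<nu>" "m < length g" "g ! m = E"
  shows "ldist \<nu> (pt g (Suc m)) = ldist \<nu> (pt g m) - 1"
  using take_Suc_E[OF assms(2,3)] by (simp add: L_eq[OF assms(1)])

lemma L_N:
  assumes "cntN g = cntN \<nu>" "m < length g" "g ! m = N"
  shows "ldist \<nu> (pt g m) \<le> ldist \<nu> (pt g (Suc m))"
  using take_Suc_N[OF assms(2,3)] ec_mono[of "cntN (take m g)" "Suc (cntN (take m g))" \<nu>]
  by (simp add: L_eq[OF assms(1)])

lemma L_step:
  assumes "cntN g = cntN \<nu>" "m < length g"
  shows "ldist \<nu> (pt g m) - 1 \<le> ldist \<nu> (pt g (Suc m))"
proof (cases "g ! m")
  case N then show ?thesis using L_N[OF assms] by simp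
next
  case E then show ?thesis using L_E[OF assms] by simp
qed

lemma L_end:
  assumes "endpt g = endpt \<nu>"
  shows "ldist \<nu> (pt g (length g)) = 0"
proof -
  have "cntN g = cntN \<nu>" "cntE g = cntE \<nu>" using assms by (auto simp: endpt_def)
  then show ?thesis by (simp add: L_eq ec_full)
qed

lemma ivt:
  fixes h :: "nat \<Rightarrow> int"
  assumes "a \<le> b" "v \<le> h a" "h b \<le> v" "\<forall>m. a \<le> m \<and> m < b \<longrightarrow> h m - 1 \<le> h (Suc m)"
  shows "\<exists>m. a \<le> m \<and> m \<le> b \<and> h m = v"
  using assms
proof (induction b)
  case 0 then show ?case by auto
next
  case (Suc b)
  show ?case
  proof (cases "a = Suc b")
    case True then show ?thesis using Suc.prems by auto
  next
    case False
    then have ab: "a \<le> b" using Suc.prems by simp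
    show ?thesis
    proof (cases "h b \<le> v")
      case True
      then obtain m where "a \<le> m \<and> m \<le> b \<and> h m = v" using Suc.IH[OF ab Suc.prems(2) True] Suc.prems(4) by auto
      then show ?thesis by (intro exI[of _ m]) auto
    next
      case False
      then have "v \<le> h (Suc b)" using Suc.prems(4) ab by force
      then show ?thesis using Suc.prems by (intro exI[of _ "Suc b"]) auto
    qed
  qed
qed

lemma step_pushrel:
  assumes cn: "cntN g = cntN \<nu>" and k: "0 < k" "k < length g" "g ! (k-1) = E" "g ! k = N"
    and k': "k < k'" "k' \<le> length g" "ldist \<nu> (pt g k') = ldist \<nu> (pt g k)"
    and nz: "\<forall>m. k < m \<and> m < k' \<longrightarrow> ldist \<nu> (pt g m) \<noteq> ldist \<nu> (pt g k)"
  shows "pushrel (Fw \<nu> g) (cntN (take k g)) (cntN (take k' g)) (Fw \<nu> (push_word g k k'))"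
proof -
  define L where "L m = ldist \<nu> (pt g m)" for m
  have pos: "k < m \<longrightarrow> m < k' \<longrightarrow> L k < L m" for m
  proof (induction m)
    case 0 then show ?case by simp
  next
    case (Suc m)
    show ?case
    proof (intro impI)
      assume a: "k < Suc m" "Suc m < k'"
      have ml: "m < length g" using a k' by simp
      have ne: "L (Suc m) \<noteq> L k" using nz a by (simp add: L_def)
      show "L k < L (Suc m)"
      proof (cases "m = k")
        case True
        then have "L k \<le> L (Suc m)" using L_N[OF cn ml] k(4) L_def by simp
        then show ?thesis using ne by simp
      next
        case False
        then have "L k < L m" using Suc.IH a by simp
        moreover have "L m - 1 \<le> L (Suc m)" using L_step[OF cn ml] L_def by simp
        ultimately show ?thesis using ne by simp
      qed
    qed
  qed
  define y where "y = cntN (take k g)"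
  define y' where "y' = cntN (take k' g)"
  have yy: "y < y'" using N_strict[OF k'(1) k(2) k(4)] y_def y'_def by simp
  have Fy: "Fw \<nu> g y = L k"
    using N_end[OF k(2) k(4)] L_eq[OF cn, of k] L_def y_def by (simp add: Fw_def)
  have mid: "Fw \<nu> g y < Fw \<nu> g s" if s: "y < s" "s < y'" for s
  proof -
    have "s < cntN g" using s y'_def cntN_take_le[of k' g] by simp
    then obtain m where m: "m < length g" "g ! m = N" "cntN (take m g) = s" using Nidx by blast
    have "k < m"
    proof (rule ccontr)
      assume "\<not> k < m"
      then have "cntN (take m g) \<le> y" using cntN_take_mono y_def by simp
      then show False using m s by simp
    qed
    moreover have "m < k'"
    proof (rule ccontr)
      assume "\<not> m < k'"
      then have "y' \<le> cntN (take m g)" using cntN_take_mono y'_def by simp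
      then show False using m s by simp
    qed
    ultimately have "L k < L m" using pos by simp
    moreover have "Fw \<nu> g s = L m"
      using N_end[OF m(1,2)] L_eq[OF cn, of m] L_def m(3) by (simp add: Fw_def)
    ultimately show ?thesis using Fy by simp
  qed
  have last: "Fw \<nu> g y' \<le> Fw \<nu> g y"
  proof -
    have "L k' = int (ec \<nu> y') - int (cntE (take k' g))" using L_eq[OF cn, of k'] L_def y'_def by simp
    moreover have "cntE (take k' g) \<le> ec g y'" using pos_le y'_def by simp
    ultimately have "Fw \<nu> g y' \<le> L k'" by (simp add: Fw_def)
    then show ?thesis using Fy k'(3) L_def by simp
  qed
  have fe: "Fw \<nu> (push_word g k k') = (\<lambda>r. if y \<le> r \<and> r < y' then Fw \<nu> g r + 1 else Fw \<nu> g r)"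
  proof
    fix r
    have "int (ec (push_word g k k') r) = int (ec g r) - (if y \<le> r \<and> r < y' then 1 else 0)"
      using push_ec(1)[of k k' g r] k k' y_def y'_def by simp
    then show "Fw \<nu> (push_word g k k') r = (if y \<le> r \<and> r < y' then Fw \<nu> g r + 1 else Fw \<nu> g r)"
      by (simp add: Fw_def)
  qed
  show ?thesis unfolding pushrel_def y_def[symmetric] y'_def[symmetric]
    using yy mid last fe by blast
qed

lemma tam_step_pushrel:
  assumes "tam_step \<nu> g g'"
  shows "\<exists>y y'. pushrel (Fw \<nu> g) y y' (Fw \<nu> g')"
proof -
  from assms obtain k k' where kk: "0 < k" "k < length g" "g ! (k - 1) = E" "g ! k = N"
        "k < k'" "k' \<le> length g" "ldist \<nu> (pt g k') = ldist \<nu> (pt g k)"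
        "\<forall>m. k < m \<and> m < k' \<longrightarrow> ldist \<nu> (pt g m) \<noteq> ldist \<nu> (pt g k)"
        "g' = push_word g k k'" and w: "g \<in> Wset \<nu>"
    unfolding tam_step_def by blast
  have "cntN g = cntN \<nu>" using w by (simp add: Wset_def above_def endpt_def)
  then show ?thesis using step_pushrel[of g \<nu> k k'] kk by blast
qed

lemma tam_step_endpt:
  assumes "tam_step \<nu> g g'"
  shows "endpt g' = endpt g"
proof -
  from assms obtain k k' where kk: "0 < k" "k < length g" "g ! (k - 1) = E"
        "k < k'" "k' \<le> length g" "g' = push_word g k k'"
    unfolding tam_step_def by blast
  then show ?thesis using push_ec(2,3)[of k k' g] by (simp add: endpt_def)
qed

lemma construct_step:
  assumes ab: "above g \<nu>" and y: "y < cntN g"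
    and ne: "(case y of 0 \<Rightarrow> 0 | Suc y'' \<Rightarrow> ec g y'') < ec g y"
  shows "\<exists>g' y'. tam_step \<nu> g g' \<and> pushrel (Fw \<nu> g) y y' (Fw \<nu> g') \<and> endpt g' = endpt g"
proof -
  have cn: "cntN g = cntN \<nu>" and ce: "cntE g = cntE \<nu>" using ab by (auto simp: above_def endpt_def)
  obtain k where k: "k < length g" "g ! k = N" "cntN (take k g) = y" using Nidx[OF y] by blast
  have ecy: "cntE (take k g) = ec g y" using N_end[OF k(1,2)] k(3) by simp
  have k0: "0 < k"
  proof (rule ccontr)
    assume "\<not> 0 < k"
    then have "ec g y = 0" using ecy by simp
    then show False using ne by simp
  qed
  have kE: "g ! (k-1) = E"
  proof (rule ccontr)
    assume "g ! (k-1) \<noteq> E"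
    then have kN: "g ! (k-1) = N" by (cases "g ! (k-1)") auto
    have km: "k - 1 < length g" "Suc (k-1) = k" using k k0 by auto
    have "cntN (take k g) = Suc (cntN (take (k-1) g))" "cntE (take k g) = cntE (take (k-1) g)"
      using take_Suc_N[OF km(1) kN] km(2) by auto
    moreover have "cntE (take (k-1) g) = ec g (cntN (take (k-1) g))" using N_end[OF km(1) kN] .
    ultimately show False using ne k(3) ecy by (cases y) auto
  qed
  define L where "L m = ldist \<nu> (pt g m)" for m
  have Lk: "L k = Fw \<nu> g y" using L_eq[OF cn, of k] k(3) ecy L_def by (simp add: Fw_def)
  have "\<forall>r. ec g r \<le> ec \<nu> r" using ab above_ec by blast
  then have Lk0: "0 \<le> L k" using Lk by (simp add: Fw_def)
  have ex: "\<exists>m. Suc k \<le> m \<and> m \<le> length g \<and> L m = L k"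
  proof (rule ivt)
    show "Suc k \<le> length g" using k by simp
    show "L k \<le> L (Suc k)" using L_N[OF cn k(1,2)] L_def by simp
    show "L (length g) \<le> L k" using L_end[of g \<nu>] ab Lk0 L_def by (simp add: above_def)
    show "\<forall>m. Suc k \<le> m \<and> m < length g \<longrightarrow> L m - 1 \<le> L (Suc m)" using L_step[OF cn] L_def by simp
  qed
  define k' where "k' = (LEAST m. k < m \<and> m \<le> length g \<and> L m = L k)"
  have ex2: "\<exists>m. k < m \<and> m \<le> length g \<and> L m = L k" using ex by (metis Suc_le_eq)
  have k'p: "k < k' \<and> k' \<le> length g \<and> L k' = L k"
    using LeastI_ex[OF ex2] k'_def by simp
  have k'min: "\<forall>m. k < m \<and> m < k' \<longrightarrow> L m \<noteq> L k"
  proof (intro allI impI)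
    fix m assume m: "k < m \<and> m < k'"
    show "L m \<noteq> L k"
    proof
      assume "L m = L k"
      then have "k' \<le> m" unfolding k'_def using m k'p by (intro Least_le) simp
      then show False using m by simp
    qed
  qed
  define g' where "g' = push_word g k k'"
  have ts: "tam_step \<nu> g g'"
    unfolding tam_step_def
  proof (intro conjI)
    show "g \<in> Wset \<nu>" using ab by (simp add: Wset_def)
    show "\<exists>k k'. 0 < k \<and> k < length g \<and> g ! (k - 1) = E \<and> g ! k = N \<and> k < k' \<and> k' \<le> length g \<and>
        ldist \<nu> (pt g k') = ldist \<nu> (pt g k) \<and>
        (\<forall>m. k < m \<and> m < k' \<longrightarrow> ldist \<nu> (pt g m) \<noteq> ldist \<nu> (pt g k)) \<and> g' = push_word g k k'"
      apply (rule exI[of _ k], rule exI[of _ k'])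
      using k0 k kE k'p k'min g'_def unfolding L_def by blast
  qed
  have pr: "pushrel (Fw \<nu> g) y (cntN (take k' g)) (Fw \<nu> g')"
    using step_pushrel[OF cn k0 k(1) kE k(2)] k'p k'min k(3) g'_def L_def by simp
  have "endpt g' = endpt g"
    using push_ec(2,3)[of k k' g] k0 k'p g'_def kE by (simp add: endpt_def)
  then show ?thesis using ts pr by blast
qed


definition Z2 :: "(nat \<Rightarrow> int) \<Rightarrow> (nat \<Rightarrow> int) \<Rightarrow> bool" where
  "Z2 f g \<longleftrightarrow> (\<exists>r t. r < t \<and> f r < f t \<and> (\<forall>s. r \<le> s \<and> s < t \<longrightarrow> g t - f t < g s - f s))"

lemma Z2I: "r < t \<Longrightarrow> f r < f t \<Longrightarrow> (\<And>s. r \<le> s \<Longrightarrow> s < t \<Longrightarrow> g t - f t < g s - f s) \<Longrightarrow> Z2 f g"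
  unfolding Z2_def by blast

lemma coreA:
  assumes z: "Z2 f g" and p: "pushrel f y y' f'"
  shows "Z2 f' g"
proof -
  obtain r t where rt: "r < t" "f r < f t" and D: "\<And>s. r \<le> s \<Longrightarrow> s < t \<Longrightarrow> g t - f t < g s - f s"
    using z unfolding Z2_def by blast
  define I where "I s \<longleftrightarrow> y \<le> s \<and> s < y'" for s
  have yy: "y < y'" and mid: "\<And>s. y < s \<Longrightarrow> s < y' \<Longrightarrow> f y < f s" and fl: "f y' \<le> f y"
    and f': "\<And>s. f' s = (if I s then f s + 1 else f s)"
    using p unfolding pushrel_def I_def by auto
  have fy: "\<And>s. I s \<Longrightarrow> f y \<le> f s"
  proof -
    fix s assume "I s"
    then show "f y \<le> f s" using mid[of s] unfolding I_def by (cases "s = y") auto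
  qed
  show ?thesis
  proof (cases "I t")
    case True
    show ?thesis
    proof (rule Z2I[of r t])
      show "r < t" by fact
      show "f' r < f' t" using rt True f'[of r] f'[of t] by auto
      fix s assume "r \<le> s" "s < t"
      then show "g t - f' t < g s - f' s" using D[of s] True f'[of s] f'[of t] by auto
    qed
  next
    case nt: False
    have wit2: "Z2 f' g" if "y' < t" "f y' < f t" "r \<le> y'" for dummy :: unit
    proof (rule Z2I[of y' t])
      show "y' < t" by fact
      show "f' y' < f' t" using that f'[of y'] f'[of t] nt by (auto simp: I_def)
      fix s assume s: "y' \<le> s" "s < t"
      then have "\<not> I s" by (auto simp: I_def)
      then show "g t - f' t < g s - f' s" using D[of s] s that f'[of s] f'[of t] nt by auto
    qed
    show ?thesis
    proof (cases "I r")
      case True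
      have "y' \<le> t" using True nt rt(1) by (auto simp: I_def)
      moreover have "f y \<le> f r" using fy True by simp
      ultimately have "y' < t" using rt fl by (cases "y' = t") auto
      moreover have "f y' < f t" using fl \<open>f y \<le> f r\<close> rt by simp
      moreover have "r \<le> y'" using True by (simp add: I_def)
      ultimately show ?thesis using wit2 by blast
    next
      case nr: False
      show ?thesis
      proof (cases "\<forall>s. r \<le> s \<and> s < t \<longrightarrow> \<not> I s")
        case True
        show ?thesis
        proof (rule Z2I[of r t])
          show "r < t" by fact
          show "f' r < f' t" using rt nr nt f'[of r] f'[of t] by auto
          fix s assume "r \<le> s" "s < t"
          then show "g t - f' t < g s - f' s" using D[of s] True nt f'[of s] f'[of t] by auto
        qed
      next
        case False
        then obtain s0 where s0: "r \<le> s0" "s0 < t" "I s0" by blast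
        have ry: "r < y" using nr s0 by (auto simp: I_def)
        have yt: "y' \<le> t" using nt s0 by (auto simp: I_def)
        show ?thesis
        proof (cases "f y < f r")
          case True
          have "y' < t" using yt rt fl True by (cases "y' = t") auto
          moreover have "f y' < f t" using fl True rt by simp
          ultimately show ?thesis using wit2 ry yy by simp
        next
          case fr: False
          show ?thesis
          proof (cases "\<forall>s. I s \<longrightarrow> g t - f t < g s - f s - 1")
            case True
            show ?thesis
            proof (rule Z2I[of r t])
              show "r < t" by fact
              show "f' r < f' t" using rt nr nt f'[of r] f'[of t] by auto
              fix s assume "r \<le> s" "s < t"
              then show "g t - f' t < g s - f' s" using D[of s] True[rule_format, of s] nt f'[of s] f'[of t] by auto
            qed
          next
            case False
            then have ex: "\<exists>s. I s \<and> g s - f s - 1 \<le> g t - f t" by auto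
            define ss where "ss = (LEAST s. I s \<and> g s - f s - 1 \<le> g t - f t)"
            have ssp: "I ss" "g ss - f ss - 1 \<le> g t - f t" using LeastI_ex[OF ex] ss_def by auto
            have ssmin: "\<And>s. s < ss \<Longrightarrow> \<not> (I s \<and> g s - f s - 1 \<le> g t - f t)"
              using not_less_Least ss_def by blast
            show ?thesis
            proof (rule Z2I[of r ss])
              show "r < ss" using ssp ry by (auto simp: I_def)
              show "f' r < f' ss" using fr fy[OF ssp(1)] nr ssp(1) f'[of r] f'[of ss] by auto
              fix s assume s: "r \<le> s" "s < ss"
              show "g ss - f' ss < g s - f' s"
              proof (cases "I s")
                case True
                then show ?thesis using ssmin[OF s(2)] ssp f'[of s] f'[of ss] by auto
              next
                case False
                have "s < t" using s ssp yt by (auto simp: I_def)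
                then show ?thesis using D[of s] s False ssp f'[of s] f'[of ss] by auto
              qed
            qed
          qed
        qed
      qed
    qed
  qed
qed

lemma coreB:
  assumes nz: "\<not> Z2 f g" and below: "\<And>r. r < y0 \<Longrightarrow> f r = g r" and lt: "f y0 < g y0"
    and le: "\<And>r. f r \<le> g r" and p: "pushrel f y0 y' f'"
  shows "(\<forall>r. f' r \<le> g r) \<and> \<not> Z2 f' g"
proof -
  define I where "I s \<longleftrightarrow> y0 \<le> s \<and> s < y'" for s
  have yy: "y0 < y'" and mid: "\<And>s. y0 < s \<Longrightarrow> s < y' \<Longrightarrow> f y0 < f s"
    and f': "\<And>s. f' s = (if I s then f s + 1 else f s)"
    using p unfolding pushrel_def I_def by auto
  have strict: "\<And>s. I s \<Longrightarrow> f s < g s"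
  proof (rule ccontr)
    fix s assume Is: "I s" and n: "\<not> f s < g s"
    then have ex: "\<exists>s. I s \<and> g s \<le> f s" by auto
    define s1 where "s1 = (LEAST s. I s \<and> g s \<le> f s)"
    have s1p: "I s1" "g s1 \<le> f s1" using LeastI_ex[OF ex] s1_def by auto
    have s1min: "\<And>s. s < s1 \<Longrightarrow> \<not> (I s \<and> g s \<le> f s)" using not_less_Least s1_def by blast
    have "s1 \<noteq> y0" using s1p lt by auto
    then have ys1: "y0 < s1" using s1p by (auto simp: I_def)
    have "Z2 f g"
    proof (rule Z2I[of y0 s1])
      show "y0 < s1" by fact
      show "f y0 < f s1" using mid ys1 s1p by (auto simp: I_def)
      fix s assume s: "y0 \<le> s" "s < s1"
      then have "I s" using s1p by (auto simp: I_def)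
      then have "f s < g s" using s1min[OF s(2)] by auto
      then show "g s1 - f s1 < g s - f s" using s1p le[of s1] by simp
    qed
    then show False using nz by simp
  qed
  have A: "\<forall>r. f' r \<le> g r"
  proof
    fix r show "f' r \<le> g r" using strict[of r] le[of r] f'[of r] by auto
  qed
  have B: "\<not> Z2 f' g"
  proof
    assume "Z2 f' g"
    then obtain r t where rt: "r < t" "f' r < f' t" and D: "\<And>s. r \<le> s \<Longrightarrow> s < t \<Longrightarrow> g t - f' t < g s - f' s"
      unfolding Z2_def by blast
    have "Z2 f g"
    proof (cases "I t")
      case False
      show ?thesis
      proof (rule Z2I[of r t])
        show "r < t" by fact
        show "f r < f t" using rt False f'[of r] f'[of t] by (auto split: if_splits)
        fix s assume "r \<le> s" "s < t"
        then show "g t - f t < g s - f s" using D[of s] False f'[of s] f'[of t] by (auto split: if_splits)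
      qed
    next
      case True
      show ?thesis
      proof (cases "y0 \<le> r")
        case True
        have Ir: "\<And>s. r \<le> s \<Longrightarrow> s \<le> t \<Longrightarrow> I s" using True \<open>I t\<close> by (auto simp: I_def)
        show ?thesis
        proof (rule Z2I[of r t])
          show "r < t" by fact
          show "f r < f t" using rt Ir[of r] Ir[of t] f'[of r] f'[of t] by auto
          fix s assume s: "r \<le> s" "s < t"
          then show "g t - f t < g s - f s" using D[of s] Ir[of s] Ir[of t] f'[of s] f'[of t] by auto
        qed
      next
        case False
        then have "f' r = g r" using below[of r] f'[of r] by (auto simp: I_def)
        moreover have "g t - f' t < g r - f' r" using D[of r] rt by simp
        ultimately show ?thesis using A by (metis diff_ge_0_iff_ge diff_self not_less)
      qed
    qed
    then show False using nz by simp
  qed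
  show ?thesis using A B by blast
qed

lemma Z2_refl: "\<not> Z2 f f"
  unfolding Z2_def by auto


definition Hc :: "colour list \<Rightarrow> colour \<Rightarrow> colour \<Rightarrow> nat \<Rightarrow> int" where
  "Hc cs L R x = int (length (filter (\<lambda>c. c = L) (take x cs))) - int (length (filter (\<lambda>c. c = R) (take x cs)))"

definition M0 :: "colour list \<Rightarrow> colour \<Rightarrow> colour \<Rightarrow> (nat \<times> nat) set" where
  "M0 cs L R = {(a, b). a < b \<and> b < length cs \<and> cs ! a = L \<and> Hc cs L R (Suc b) = Hc cs L R a \<and>
       (\<forall>x. a < x \<and> x \<le> b \<longrightarrow> Hc cs L R a < Hc cs L R x)}"

lemma Hc_0: "Hc cs L R 0 = 0" by (simp add: Hc_def)

lemma Hc_step: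
  assumes "x < length cs" "L \<noteq> R"
  shows "Hc cs L R (Suc x) = Hc cs L R x + (if cs ! x = L then 1 else if cs ! x = R then -1 else 0)"
  using assms by (simp add: Hc_def take_Suc_conv_app_nth)

lemma cnt_card: "x \<le> length cs \<Longrightarrow> length (filter (\<lambda>c. c = col) (take x cs)) = card {p. p < x \<and> cs ! p = col}"
proof -
  assume x: "x \<le> length cs"
  have "length (filter (\<lambda>c. c = col) (take x cs)) = card {i. i < length (take x cs) \<and> take x cs ! i = col}"
    by (rule length_filter_conv_card)
  also have "\<dots> = card {p. p < x \<and> cs ! p = col}"
    using x by (intro arg_cong[where f=card]) auto
  finally show ?thesis .
qed

lemma card_split: "(x::nat) \<le> y \<Longrightarrow> card {p. p < y \<and> P p} = card {p. p < x \<and> P p} + card {p. x \<le> p \<and> p < y \<and> P p}"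
proof -
  assume xy: "x \<le> y"
  have "{p. p < y \<and> P p} = {p. p < x \<and> P p} \<union> {p. x \<le> p \<and> p < y \<and> P p}" using xy by auto
  moreover have "{p. p < x \<and> P p} \<inter> {p. x \<le> p \<and> p < y \<and> P p} = {}" by auto
  moreover have f1: "finite {p. p < x \<and> P p}" by simp
  moreover have f2: "finite {p. x \<le> p \<and> p < y \<and> P p}" by (rule finite_subset[of _ "{..<y}"]) auto
  ultimately show ?thesis using card_Un_disjoint[OF f1 f2] by simp
qed

lemma Hc_diff:
  assumes "x \<le> y" "y \<le> length cs"
  shows "Hc cs L R y - Hc cs L R x = int (card {p. x \<le> p \<and> p < y \<and> cs ! p = L}) - int (card {p. x \<le> p \<and> p < y \<and> cs ! p = R})"
proof -
  have "x \<le> length cs" using assms by simp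
  then show ?thesis using assms
    by (simp add: Hc_def cnt_card card_split[of x y "\<lambda>p. cs ! p = L"] card_split[of x y "\<lambda>p. cs ! p = R"])
qed

lemma M0_iff: "(a, b) \<in> M0 cs L R \<longleftrightarrow> a < b \<and> b < length cs \<and> cs ! a = L \<and>
   Hc cs L R (Suc b) = Hc cs L R a \<and> (\<forall>x. a < x \<and> x \<le> b \<longrightarrow> Hc cs L R a < Hc cs L R x)"
  by (simp add: M0_def)

lemma M0_fun1: "(a, b) \<in> M0 cs L R \<Longrightarrow> (a, b') \<in> M0 cs L R \<Longrightarrow> b < b' \<Longrightarrow> False"
proof -
  assume a: "(a, b) \<in> M0 cs L R" "(a, b') \<in> M0 cs L R" "b < b'"
  have eq: "Hc cs L R (Suc b) = Hc cs L R a" and ab: "a < b" using a(1) by (auto simp: M0_iff)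
  have all: "\<forall>x. a < x \<and> x \<le> b' \<longrightarrow> Hc cs L R a < Hc cs L R x" using a(2) by (simp add: M0_iff)
  have "Hc cs L R a < Hc cs L R (Suc b)" using all[rule_format, of "Suc b"] a(3) ab by simp
  then show False using \<open>Hc cs L R (Suc b) = Hc cs L R a\<close> by simp
qed

lemma M0_fun: "(a, b) \<in> M0 cs L R \<Longrightarrow> (a, b') \<in> M0 cs L R \<Longrightarrow> b = b'"
  using M0_fun1 by (metis linorder_neqE_nat)

lemma M0_arc:
  assumes "(a, b) \<in> M0 cs L R" "L \<noteq> R"
  shows "a < b \<and> b < length cs \<and> cs ! a = L \<and> cs ! b = R"
proof -
  have ab: "a < b" "b < length cs" "cs ! a = L" "Hc cs L R (Suc b) = Hc cs L R a"
    "Hc cs L R a < Hc cs L R b" using assms(1) unfolding M0_def by auto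
  have "cs ! b = R"
    using Hc_step[OF ab(2) assms(2)] ab(4,5) by (auto split: if_splits)
  then show ?thesis using ab by simp
qed

lemma M0_left:
  assumes LR: "L \<noteq> R" and pre: "\<forall>x \<le> length cs. 0 \<le> Hc cs L R x" and tot: "Hc cs L R (length cs) = 0"
    and d: "d < length cs" "cs ! d = L"
  shows "\<exists>b. (d, b) \<in> M0 cs L R"
proof -
  let ?H = "Hc cs L R"
  have s: "?H (Suc d) = ?H d + 1" using Hc_step[OF d(1) LR] d(2) by simp
  have ex: "\<exists>x. Suc d < x \<and> x \<le> length cs \<and> ?H x \<le> ?H d"
  proof -
    have "?H (length cs) \<le> ?H d" using tot pre d by simp
    moreover have "length cs \<noteq> Suc d"
    proof
      assume "length cs = Suc d" then show False using tot s pre[rule_format, of d] d by simp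
    qed
    ultimately show ?thesis using d by (intro exI[of _ "length cs"]) auto
  qed
  define x where "x = (LEAST x. Suc d < x \<and> x \<le> length cs \<and> ?H x \<le> ?H d)"
  have xp: "Suc d < x" "x \<le> length cs" "?H x \<le> ?H d" using LeastI_ex[OF ex] x_def by auto
  have xmin: "\<And>z. z < x \<Longrightarrow> \<not> (Suc d < z \<and> z \<le> length cs \<and> ?H z \<le> ?H d)"
    using not_less_Least x_def by blast
  obtain b where b: "x = Suc b" using xp by (cases x) auto
  have above: "\<And>z. d < z \<Longrightarrow> z \<le> b \<Longrightarrow> ?H d < ?H z"
  proof -
    fix z assume z: "d < z" "z \<le> b"
    show "?H d < ?H z"
    proof (cases "z = Suc d")
      case True then show ?thesis using s by simp
    next
      case False then show ?thesis using xmin[of z] z xp b by auto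
    qed
  qed
  have bl: "b < length cs" using xp b by simp
  have "?H b > ?H d" using above[of b] xp b by simp
  moreover have "?H (Suc b) \<ge> ?H b - 1" using Hc_step[OF bl LR] by auto
  ultimately have "?H (Suc b) = ?H d" using xp b by simp
  then have "(d, b) \<in> M0 cs L R" unfolding M0_def using xp b bl d above by auto
  then show ?thesis by blast
qed

lemma M0_right:
  assumes LR: "L \<noteq> R" and pre: "\<forall>x \<le> length cs. 0 \<le> Hc cs L R x"
    and d: "d < length cs" "cs ! d = R"
  shows "\<exists>a. (a, d) \<in> M0 cs L R"
proof -
  let ?H = "Hc cs L R"
  have s: "?H (Suc d) = ?H d - 1" using Hc_step[OF d(1) LR] d(2) LR by simp
  have ex: "\<exists>x. x \<le> d \<and> ?H x \<le> ?H (Suc d)" using pre d Hc_0 by (intro exI[of _ 0]) auto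
  define a where "a = (GREATEST x. x \<le> d \<and> ?H x \<le> ?H (Suc d))"
  have ap: "a \<le> d" "?H a \<le> ?H (Suc d)"
    using GreatestI_ex_nat[OF ex, of d] a_def by auto
  have amax: "\<And>z. a < z \<Longrightarrow> z \<le> d \<Longrightarrow> ?H (Suc d) < ?H z"
  proof -
    fix z assume z: "a < z" "z \<le> d"
    have "\<not> (z \<le> d \<and> ?H z \<le> ?H (Suc d))"
    proof
      assume "z \<le> d \<and> ?H z \<le> ?H (Suc d)"
      then have "z \<le> a" using Greatest_le_nat[of "\<lambda>x. x \<le> d \<and> ?H x \<le> ?H (Suc d)" z d] a_def by auto
      then show False using z by simp
    qed
    then show "?H (Suc d) < ?H z" using z by simp
  qed
  have ad: "a < d" using ap amax[of d] s by (cases "a = d") auto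
  have al: "a < length cs" using ad d by simp
  have "?H (Suc a) > ?H (Suc d)" using amax[of "Suc a"] ad by simp
  then have La: "cs ! a = L" and Ha: "?H a = ?H (Suc d)"
    using Hc_step[OF al LR] ap by (auto split: if_splits)
  have "(a, d) \<in> M0 cs L R" unfolding M0_def using ad d La Ha amax by auto
  then show ?thesis by blast
qed

lemma M0_nc:
  assumes LR: "L \<noteq> R" and pre: "\<forall>x \<le> length cs. 0 \<le> Hc cs L R x" and tot: "Hc cs L R (length cs) = 0"
  shows "nc_matching cs L R (M0 cs L R)"
proof -
  let ?M = "M0 cs L R"
  have c1: "\<forall>(a, b) \<in> ?M. a < b \<and> b < length cs \<and> cs ! a = L \<and> cs ! b = R"
    using M0_arc[OF _ LR] by blast
  have c2: "card {e \<in> ?M. fst e = d \<or> snd e = d} = 1" if d: "d < length cs" "cs ! d = L \<or> cs ! d = R" for d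
  proof (cases "cs ! d = L")
    case True
    obtain b where b: "(d, b) \<in> ?M" using M0_left[OF LR pre tot d(1) True] by blast
    have "{e \<in> ?M. fst e = d \<or> snd e = d} = {(d, b)}"
    proof (intro equalityI subsetI)
      fix e assume e: "e \<in> {e \<in> ?M. fst e = d \<or> snd e = d}"
      obtain a' b' where e': "e = (a', b')" by (cases e)
      have arc: "cs ! b' = R" using M0_arc[OF _ LR] e e' by auto
      then have "a' = d" using e e' True LR by auto
      then show "e \<in> {(d, b)}" using M0_fun[OF b] e e' by auto
    next
      fix e assume "e \<in> {(d, b)}" then show "e \<in> {e \<in> ?M. fst e = d \<or> snd e = d}" using b by auto
    qed
    then show ?thesis by simp
  next
    case False
    then have R: "cs ! d = R" using d by simp
    obtain a where a: "(a, d) \<in> ?M" using M0_right[OF LR pre d(1) R] by blast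
    have "{e \<in> ?M. fst e = d \<or> snd e = d} = {(a, d)}"
    proof (intro equalityI subsetI)
      fix e assume e: "e \<in> {e \<in> ?M. fst e = d \<or> snd e = d}"
      obtain a' b' where e': "e = (a', b')" by (cases e)
      have "cs ! a' = L" using M0_arc[OF _ LR] e e' by auto
      then have b'd: "b' = d" using e e' R LR by auto
      have "a' = a"
      proof (rule ccontr)
        assume ne: "a' \<noteq> a"
        have p1: "(a', d) \<in> ?M" using e e' b'd by auto
        have h1: "a' < d" "Hc cs L R (Suc d) = Hc cs L R a'" "\<forall>x. a' < x \<and> x \<le> d \<longrightarrow> Hc cs L R a' < Hc cs L R x"
          using p1 unfolding M0_def by auto
        have h2: "a < d" "Hc cs L R (Suc d) = Hc cs L R a" "\<forall>x. a < x \<and> x \<le> d \<longrightarrow> Hc cs L R a < Hc cs L R x"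
          using a unfolding M0_def by auto
        from ne have "a' < a \<or> a < a'" by arith
        then show False
        proof
          assume "a' < a" then show False using h1 h2 by force
        next
          assume "a < a'" then show False using h1 h2 by force
        qed
      qed
      then show "e \<in> {(a, d)}" using e' b'd by simp
    next
      fix e assume "e \<in> {(a, d)}" then show "e \<in> {e \<in> ?M. fst e = d \<or> snd e = d}" using a by auto
    qed
    then show ?thesis by simp
  qed
  have c3: "\<forall>(a, b) \<in> ?M. \<forall>(c, d) \<in> ?M. \<not> (a < c \<and> c < b \<and> b < d)"
  proof (intro ballI; clarify)
    fix a b c d assume ab: "(a, b) \<in> ?M" and cd: "(c, d) \<in> ?M" and o: "a < c" "c < b" "b < d"
    have "Hc cs L R a < Hc cs L R c" "Hc cs L R (Suc b) = Hc cs L R a" using ab o unfolding M0_def by auto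
    moreover have "Hc cs L R c < Hc cs L R (Suc b)" using cd o unfolding M0_def by auto
    ultimately show False by simp
  qed
  show ?thesis unfolding nc_matching_def using c1 c2 c3 by blast
qed

lemma nc_unique_touch:
  assumes "nc_matching cs L R M" "d < length cs" "cs ! d = L \<or> cs ! d = R"
    "e1 \<in> M" "fst e1 = d \<or> snd e1 = d" "e2 \<in> M" "fst e2 = d \<or> snd e2 = d"
  shows "e1 = e2"
proof -
  have "\<forall>d < length cs. (cs ! d = L \<or> cs ! d = R) \<longrightarrow> card {e \<in> M. fst e = d \<or> snd e = d} = 1"
    using assms(1) unfolding nc_matching_def by blast
  then have "card {e \<in> M. fst e = d \<or> snd e = d} = 1" using assms(2,3) by blast
  then obtain x where x: "{e \<in> M. fst e = d \<or> snd e = d} = {x}" using card_1_singletonE by blast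
  have "e1 \<in> {e \<in> M. fst e = d \<or> snd e = d}" "e2 \<in> {e \<in> M. fst e = d \<or> snd e = d}"
    using assms(4-7) by auto
  then show ?thesis unfolding x by simp
qed

lemma nc_touch_exists:
  assumes "nc_matching cs L R M" "d < length cs" "cs ! d = L \<or> cs ! d = R"
  shows "\<exists>e \<in> M. fst e = d \<or> snd e = d"
proof -
  have "\<forall>d < length cs. (cs ! d = L \<or> cs ! d = R) \<longrightarrow> card {e \<in> M. fst e = d \<or> snd e = d} = 1"
    using assms(1) unfolding nc_matching_def by blast
  then have "card {e \<in> M. fst e = d \<or> snd e = d} = 1" using assms(2,3) by blast
  then have "{e \<in> M. fst e = d \<or> snd e = d} \<noteq> {}" by force
  then show ?thesis by blast
qed

lemma nc_arc:
  assumes "nc_matching cs L R M" "(a, b) \<in> M"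
  shows "a < b \<and> b < length cs \<and> cs ! a = L \<and> cs ! b = R"
proof -
  have h: "\<forall>(a, b) \<in> M. a < b \<and> b < length cs \<and> cs ! a = L \<and> cs ! b = R"
    using assms(1) unfolding nc_matching_def by (rule conjunct1)
  show ?thesis using bspec[OF h assms(2)] by simp
qed

lemma nc_noncross:
  assumes "nc_matching cs L R M" "(a, b) \<in> M" "(c, d) \<in> M"
  shows "\<not> (a < c \<and> c < b \<and> b < d)"
proof -
  have h: "\<forall>(a, b) \<in> M. \<forall>(c, d) \<in> M. \<not> (a < c \<and> c < b \<and> b < d)"
    using assms(1) unfolding nc_matching_def by blast
  have "\<forall>(c, d) \<in> M. \<not> (a < c \<and> c < b \<and> b < d)" using bspec[OF h assms(2)] by simp
  then show ?thesis using assms(3) by blast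
qed

lemma nc_in_M0:
  assumes LR: "L \<noteq> R" and nc: "nc_matching cs L R M" and ab: "(a, b) \<in> M"
  shows "(a, b) \<in> M0 cs L R"
proof -
  have arc: "a < b" "b < length cs" "cs ! a = L" "cs ! b = R" using nc_arc[OF nc ab] by auto
  have pR: "\<exists>!a'. (a', p) \<in> M" if p: "p < length cs" "cs ! p = R" for p
  proof -
    obtain e where e: "e \<in> M" "fst e = p \<or> snd e = p" using nc_touch_exists[OF nc p(1)] p by blast
    obtain a' b' where e': "e = (a', b')" by (cases e)
    have "cs ! a' = L" using nc_arc[OF nc] e e' by auto
    then have "b' = p" using e e' p LR by auto
    moreover have "a2 = a'" if "(a2, p) \<in> M" for a2
      using nc_unique_touch[OF nc p(1) _ that _ e(1)] e e' p \<open>b' = p\<close> by auto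
    ultimately show ?thesis using e e' by blast
  qed
  have pL: "\<exists>!b'. (q, b') \<in> M" if q: "q < length cs" "cs ! q = L" for q
  proof -
    obtain e where e: "e \<in> M" "fst e = q \<or> snd e = q" using nc_touch_exists[OF nc q(1)] q by blast
    obtain a' b' where e': "e = (a', b')" by (cases e)
    have "cs ! b' = R" using nc_arc[OF nc] e e' by auto
    then have "a' = q" using e e' q LR by auto
    moreover have "b2 = b'" if "(q, b2) \<in> M" for b2
      using nc_unique_touch[OF nc q(1) _ that _ e(1)] e e' q \<open>a' = q\<close> by auto
    ultimately show ?thesis using e e' by blast
  qed
  define SL where "SL x y = {p. x < p \<and> p < y \<and> cs ! p = L}" for x y
  define SR where "SR x y = {p. x < p \<and> p < y \<and> cs ! p = R}" for x y
  have claim1: "card (SR a x) \<le> card (SL a x)" if x: "a < x" "x \<le> b" for x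
  proof -
    define f where "f p = (THE a'. (a', p) \<in> M)" for p
    have fp: "(f p, p) \<in> M" if "p \<in> SR a x" for p
    proof -
      have "p < length cs" "cs ! p = R" using that x arc unfolding SR_def by auto
      then show ?thesis unfolding f_def using pR theI' by metis
    qed
    have "inj_on f (SR a x)"
    proof (rule inj_onI)
      fix p1 p2 assume p: "p1 \<in> SR a x" "p2 \<in> SR a x" "f p1 = f p2"
      have a1: "(f p1, p1) \<in> M" using fp[OF p(1)] .
      have a2: "(f p1, p2) \<in> M" using fp[OF p(2)] p(3) by simp
      have "f p1 < length cs" "cs ! f p1 = L" using nc_arc[OF nc a1] by auto
      then have "(f p1, p1) = (f p1, p2)"
        using nc_unique_touch[OF nc, of "f p1" "(f p1, p1)" "(f p1, p2)"] a1 a2 by auto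
      then show "p1 = p2" by simp
    qed
    moreover have "f ` SR a x \<subseteq> SL a x"
    proof
      fix z assume "z \<in> f ` SR a x"
      then obtain p where p: "p \<in> SR a x" "z = f p" by blast
      have pa: "(f p, p) \<in> M" using fp[OF p(1)] .
      have ar: "f p < p" "cs ! f p = L" using nc_arc[OF nc pa] by auto
      have pb: "a < p" "p < b" using p x unfolding SR_def by auto
      have "f p \<noteq> a"
      proof
        assume "f p = a"
        then have "(a, p) = (a, b)" using nc_unique_touch[OF nc, of a "(a, p)" "(a, b)"] pa ab arc by auto
        then show False using pb by simp
      qed
      moreover have "\<not> f p < a" using nc_noncross[OF nc pa ab] pb by auto
      ultimately have "a < f p" by simp
      then show "z \<in> SL a x" using p ar x unfolding SL_def SR_def by auto
    qed
    moreover have "finite (SL a x)" unfolding SL_def by simp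
    ultimately show ?thesis by (rule card_inj_on_le)
  qed
  have claim2: "card (SL a b) \<le> card (SR a b)"
  proof -
    define f where "f q = (THE b'. (q, b') \<in> M)" for q
    have fq: "(q, f q) \<in> M" if "q \<in> SL a b" for q
    proof -
      have "q < length cs" "cs ! q = L" using that arc unfolding SL_def by auto
      then show ?thesis unfolding f_def using pL theI' by metis
    qed
    have "inj_on f (SL a b)"
    proof (rule inj_onI)
      fix q1 q2 assume q: "q1 \<in> SL a b" "q2 \<in> SL a b" "f q1 = f q2"
      have a1: "(q1, f q1) \<in> M" using fq[OF q(1)] .
      have a2: "(q2, f q1) \<in> M" using fq[OF q(2)] q(3) by simp
      have "f q1 < length cs" "cs ! f q1 = R" using nc_arc[OF nc a1] by auto
      then have "(q1, f q1) = (q2, f q1)"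
        using nc_unique_touch[OF nc, of "f q1" "(q1, f q1)" "(q2, f q1)"] a1 a2 by auto
      then show "q1 = q2" by simp
    qed
    moreover have "f ` SL a b \<subseteq> SR a b"
    proof
      fix z assume "z \<in> f ` SL a b"
      then obtain q where q: "q \<in> SL a b" "z = f q" by blast
      have qa: "(q, f q) \<in> M" using fq[OF q(1)] .
      have ar: "q < f q" "cs ! f q = R" using nc_arc[OF nc qa] by auto
      have qb: "a < q" "q < b" using q unfolding SL_def by auto
      have "f q \<noteq> b"
      proof
        assume "f q = b"
        then have "(q, b) = (a, b)" using nc_unique_touch[OF nc, of b "(q, b)" "(a, b)"] qa ab arc by auto
        then show False using qb by simp
      qed
      moreover have "\<not> b < f q" using nc_noncross[OF nc ab qa] qb by auto
      ultimately have "f q < b" by simp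
      then show "z \<in> SR a b" using q ar qb unfolding SL_def SR_def by auto
    qed
    moreover have "finite (SR a b)" unfolding SR_def by simp
    ultimately show ?thesis by (rule card_inj_on_le)
  qed
  have setL: "{p. a \<le> p \<and> p < x \<and> cs ! p = L} = insert a (SL a x)" if "a < x" for x
    using that arc unfolding SL_def by auto
  have setR: "{p. a \<le> p \<and> p < x \<and> cs ! p = R} = SR a x" for x
    using arc LR unfolding SR_def by (auto simp: order.order_iff_strict)
  have finSL: "finite (SL a x)" for x unfolding SL_def by simp
  have pos: "Hc cs L R a < Hc cs L R x" if x: "a < x" "x \<le> b" for x
  proof -
    have "Hc cs L R x - Hc cs L R a = int (card (insert a (SL a x))) - int (card (SR a x))"
      using Hc_diff[of a x cs L R] x arc setL[OF x(1)] setR[of x] by simp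
    also have "\<dots> = 1 + int (card (SL a x)) - int (card (SR a x))"
      using finSL by (simp add: SL_def)
    finally show ?thesis using claim1[OF x] by simp
  qed
  have eq: "Hc cs L R (Suc b) = Hc cs L R a"
  proof -
    have "SL a (Suc b) = SL a b" using arc LR unfolding SL_def by (auto simp: less_Suc_eq)
    moreover have "SR a (Suc b) = insert b (SR a b)" using arc unfolding SR_def by (auto simp: less_Suc_eq)
    moreover have "finite (SR a b)" unfolding SR_def by simp
    moreover have "b \<notin> SR a b" unfolding SR_def by simp
    ultimately have "Hc cs L R (Suc b) - Hc cs L R a = 1 + int (card (SL a b)) - (1 + int (card (SR a b)))"
      using Hc_diff[of a "Suc b" cs L R] arc setL[of "Suc b"] setR[of "Suc b"] finSL[of b]
        by (simp add: SL_def)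
    moreover have "card (SR a b) \<le> card (SL a b)" using claim1[of b] arc by simp
    ultimately show ?thesis using claim2 by simp
  qed
  show ?thesis unfolding M0_def using arc pos eq by auto
qed

lemma THE_M0:
  assumes LR: "L \<noteq> R" and pre: "\<forall>x \<le> length cs. 0 \<le> Hc cs L R x" and tot: "Hc cs L R (length cs) = 0"
  shows "(THE M. nc_matching cs L R M) = M0 cs L R"
proof (rule the_equality)
  show "nc_matching cs L R (M0 cs L R)" by (rule M0_nc[OF LR pre tot])
next
  fix M assume nc: "nc_matching cs L R M"
  show "M = M0 cs L R"
  proof (intro equalityI subsetI)
    fix e assume "e \<in> M" then show "e \<in> M0 cs L R" using nc_in_M0[OF LR nc] by (cases e) auto
  next
    fix e assume e: "e \<in> M0 cs L R"
    obtain a b where e': "e = (a, b)" by (cases e)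
    have "(a, b) \<in> M0 cs L R" using e e' by simp
    then have "a < b \<and> b < length cs \<and> cs ! a = L \<and> cs ! b = R" by (rule M0_arc[OF _ LR])
    then have arc: "a < length cs" "cs ! a = L" by auto
    obtain e2 where e2: "e2 \<in> M" "fst e2 = a \<or> snd e2 = a" using nc_touch_exists[OF nc arc(1)] arc by blast
    obtain a2 b2 where e2': "e2 = (a2, b2)" by (cases e2)
    have "cs ! b2 = R" using nc_arc[OF nc] e2 e2' by auto
    then have "a2 = a" using e2 e2' arc LR by auto
    then have "(a, b2) \<in> M0 cs L R" using nc_in_M0[OF LR nc] e2 e2' by auto
    then have "b2 = b" using M0_fun e e' by metis
    then show "e \<in> M" using e2 e2' e' \<open>a2 = a\<close> by simp
  qed
qed


definition blk :: "(nat \<Rightarrow> nat) \<Rightarrow> (nat \<Rightarrow> nat) \<Rightarrow> (nat \<Rightarrow> nat) \<Rightarrow> nat \<Rightarrow> colour list" where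
  "blk a b c r = replicate (a r) Blue @ replicate (b r) Black @ replicate (c r) Red"

definition wd :: "(nat \<Rightarrow> nat) \<Rightarrow> (nat \<Rightarrow> nat) \<Rightarrow> (nat \<Rightarrow> nat) \<Rightarrow> nat \<Rightarrow> colour list" where
  "wd a b c n = concat (map (blk a b c) [0..<n])"

definition SS :: "(nat \<Rightarrow> nat) \<Rightarrow> (nat \<Rightarrow> nat) \<Rightarrow> (nat \<Rightarrow> nat) \<Rightarrow> nat \<Rightarrow> nat" where
  "SS a b c s = (\<Sum>r<s. a r + b r + c r)"

definition Fl :: "(nat \<Rightarrow> nat) \<Rightarrow> (nat \<Rightarrow> nat) \<Rightarrow> nat \<Rightarrow> int" where
  "Fl a b s = (\<Sum>r<s. int (a r) - int (b r))"

lemma length_blk[simp]: "length (blk a b c r) = a r + b r + c r"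
  by (simp add: blk_def)

lemma wd_Suc: "wd a b c (Suc n) = wd a b c n @ blk a b c n"
  by (simp add: wd_def)

lemma wd_0[simp]: "wd a b c 0 = []" by (simp add: wd_def)

lemma SS_Suc: "SS a b c (Suc s) = SS a b c s + (a s + b s + c s)"
  by (simp add: SS_def)

lemma Fl_Suc: "Fl a b (Suc s) = Fl a b s + int (a s) - int (b s)"
  by (simp add: Fl_def)

lemma length_wd: "length (wd a b c n) = SS a b c n"
  by (induction n) (simp_all add: wd_Suc SS_Suc SS_def)

lemma SS_mono: "s \<le> s' \<Longrightarrow> SS a b c s \<le> SS a b c s'"
  unfolding SS_def by (rule sum_mono2) auto

lemma wd_prefix: "s \<le> n \<Longrightarrow> \<exists>rest. wd a b c n = wd a b c s @ rest"
proof (induction n)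
  case 0 then show ?case by simp
next
  case (Suc n)
  show ?case
  proof (cases "s = Suc n")
    case True then show ?thesis by simp
  next
    case False
    then obtain rest where "wd a b c n = wd a b c s @ rest" using Suc by auto
    then show ?thesis by (simp add: wd_Suc)
  qed
qed

lemma wd_split: "s < n \<Longrightarrow> \<exists>rest. wd a b c n = wd a b c s @ blk a b c s @ rest"
  using wd_prefix[of "Suc s" n a b c] by (auto simp: wd_Suc)

lemma take_wd:
  assumes "s < n" "u \<le> a s + b s + c s"
  shows "take (SS a b c s + u) (wd a b c n) = wd a b c s @ take u (blk a b c s)"
proof -
  obtain rest where r: "wd a b c n = wd a b c s @ blk a b c s @ rest" using wd_split[OF assms(1)] by blast
  show ?thesis unfolding r using assms(2) by (simp add: length_wd)
qed

lemma nth_wd: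
  assumes "s < n" "u < a s + b s + c s"
  shows "wd a b c n ! (SS a b c s + u) = blk a b c s ! u"
proof -
  obtain rest where r: "wd a b c n = wd a b c s @ blk a b c s @ rest" using wd_split[OF assms(1)] by blast
  show ?thesis unfolding r using assms(2) by (simp add: length_wd nth_append)
qed

lemma nth_blk:
  assumes "u < a r + b r + c r"
  shows "blk a b c r ! u = (if u < a r then Blue else if u < a r + b r then Black else Red)"
  using assms by (simp add: blk_def nth_append, arith)

lemma cnt_blk:
  "length (filter (\<lambda>x. x = Blue) (take u (blk a b c r))) = min u (a r)"
  "length (filter (\<lambda>x. x = Black) (take u (blk a b c r))) = min (u - a r) (b r)"
  "length (filter (\<lambda>x. x = Red) (take u (blk a b c r))) = min (u - a r - b r) (c r)"
  by (simp_all add: blk_def filter_replicate)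

lemma cnt_wd:
  "length (filter (\<lambda>x. x = Blue) (wd a b c s)) = (\<Sum>r<s. a r)"
  "length (filter (\<lambda>x. x = Black) (wd a b c s)) = (\<Sum>r<s. b r)"
  "length (filter (\<lambda>x. x = Red) (wd a b c s)) = (\<Sum>r<s. c r)"
  by (induction s) (simp_all add: wd_Suc blk_def filter_replicate)

lemma Hl_formula:
  assumes "s < n" "u \<le> a s + b s + c s"
  shows "Hc (wd a b c n) Blue Black (SS a b c s + u) = Fl a b s + int (min u (a s)) - int (min (u - a s) (b s))"
proof -
  have "Hc (wd a b c n) Blue Black (SS a b c s + u) =
     int (\<Sum>r<s. a r) + int (min u (a s)) - (int (\<Sum>r<s. b r) + int (min (u - a s) (b s)))"
    unfolding Hc_def take_wd[where a=a and b=b and c=c, OF assms] by (simp add: cnt_blk cnt_wd)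
  also have "\<dots> = Fl a b s + int (min u (a s)) - int (min (u - a s) (b s))"
    by (simp add: Fl_def sum_subtractf of_nat_sum)
  finally show ?thesis .
qed

lemma Hu_formula:
  assumes "s < n" "u \<le> a s + b s + c s"
  shows "Hc (wd a b c n) Black Red (SS a b c s + u) = Fl b c s + int (min (u - a s) (b s)) - int (u - a s - b s)"
proof -
  have m: "min (u - (a s + b s)) (c s) = u - (a s + b s)" using assms(2) by simp
  have "Hc (wd a b c n) Black Red (SS a b c s + u) =
     int (\<Sum>r<s. b r) + int (min (u - a s) (b s)) - (int (\<Sum>r<s. c r) + int (u - a s - b s))"
    unfolding Hc_def take_wd[where a=a and b=b and c=c, OF assms] by (simp add: cnt_blk cnt_wd m)
  also have "\<dots> = Fl b c s + int (min (u - a s) (b s)) - int (u - a s - b s)"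
    by (simp add: Fl_def sum_subtractf of_nat_sum)
  finally show ?thesis .
qed

lemma Hl_lb:
  assumes "s < n" "u \<le> a s + b s + c s"
  shows "min (Fl a b s) (Fl a b (Suc s)) \<le> Hc (wd a b c n) Blue Black (SS a b c s + u)"
  unfolding Hl_formula[where a=a and b=b and c=c, OF assms] Fl_Suc by (cases "u \<le> a s") auto

lemma Hu_lb:
  assumes "s < n" "u \<le> a s + b s + c s"
  shows "min (Fl b c s) (Fl b c (Suc s)) \<le> Hc (wd a b c n) Black Red (SS a b c s + u)"
  unfolding Hu_formula[where a=a and b=b and c=c, OF assms] Fl_Suc using assms(2) by (cases "u \<le> a s + b s") auto

lemma decomp:
  "x < SS a b c n \<Longrightarrow> \<exists>s u. s < n \<and> u < a s + b s + c s \<and> x = SS a b c s + u"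
proof (induction n)
  case 0 then show ?case by (simp add: SS_def)
next
  case (Suc n)
  show ?case
  proof (cases "x < SS a b c n")
    case True then show ?thesis using Suc by (meson less_Suc_eq)
  next
    case False
    then show ?thesis using Suc.prems
      by (intro exI[of _ n] exI[of _ "x - SS a b c n"]) (auto simp: SS_Suc)
  qed
qed

lemma decomp_le:
  assumes "x \<le> SS a b c n" "0 < n"
  shows "\<exists>s u. s < n \<and> u \<le> a s + b s + c s \<and> x = SS a b c s + u"
proof (cases "x < SS a b c n")
  case True then show ?thesis using decomp by (meson less_imp_le)
next
  case False
  then have "x = SS a b c (n - 1) + (a (n-1) + b (n-1) + c (n-1))"
    using assms SS_Suc[of a b c "n-1"] by simp
  then show ?thesis using assms by (intro exI[of _ "n-1"] exI[of _ "a (n-1) + b (n-1) + c (n-1)"]) auto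
qed

lemma row_ge: "x = SS a b c s + u \<Longrightarrow> u < a s + b s + c s \<Longrightarrow> SS a b c p \<le> x \<Longrightarrow> p \<le> s"
proof (rule ccontr)
  assume a: "x = SS a b c s + u" "u < a s + b s + c s" "SS a b c p \<le> x" "\<not> p \<le> s"
  then have "SS a b c (Suc s) \<le> SS a b c p" using SS_mono by simp
  then show False using a SS_Suc[of a b c s] by simp
qed

lemma row_lt: "x = SS a b c s + u \<Longrightarrow> x < SS a b c q \<Longrightarrow> s < q"
proof (rule ccontr)
  assume a: "x = SS a b c s + u" "x < SS a b c q" "\<not> s < q"
  then have "SS a b c q \<le> SS a b c s" using SS_mono by simp
  then show False using a by simp
qed


lemma prefix_L:
  assumes n: "0 < n" and nn: "\<forall>s \<le> n. 0 \<le> Fl a b s" and z: "Fl a b n = 0"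
  shows "\<forall>x \<le> length (wd a b c n). 0 \<le> Hc (wd a b c n) Blue Black x"
    and "Hc (wd a b c n) Blue Black (length (wd a b c n)) = 0"
proof -
  show "\<forall>x \<le> length (wd a b c n). 0 \<le> Hc (wd a b c n) Blue Black x"
  proof (intro allI impI)
    fix x assume "x \<le> length (wd a b c n)"
    then obtain s u where su: "s < n" "u \<le> a s + b s + c s" "x = SS a b c s + u"
      using decomp_le[OF _ n] by (metis length_wd)
    have "min (Fl a b s) (Fl a b (Suc s)) \<le> Hc (wd a b c n) Blue Black x"
      using Hl_lb[where a=a and b=b and c=c, OF su(1,2)] su(3) by simp
    moreover have "0 \<le> Fl a b s" "0 \<le> Fl a b (Suc s)" using nn su by auto
    ultimately show "0 \<le> Hc (wd a b c n) Blue Black x" by simp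
  qed
  have e: "length (wd a b c n) = SS a b c (n-1) + (a (n-1) + b (n-1) + c (n-1))"
    using n SS_Suc[of a b c "n-1"] by (simp add: length_wd)
  show "Hc (wd a b c n) Blue Black (length (wd a b c n)) = 0"
    unfolding e using Hl_formula[of "n-1" n "a (n-1) + b (n-1) + c (n-1)" a b c] n z Fl_Suc[of a b "n-1"]
    by simp
qed

lemma prefix_U:
  assumes n: "0 < n" and nn: "\<forall>s \<le> n. 0 \<le> Fl b c s" and z: "Fl b c n = 0"
  shows "\<forall>x \<le> length (wd a b c n). 0 \<le> Hc (wd a b c n) Black Red x"
    and "Hc (wd a b c n) Black Red (length (wd a b c n)) = 0"
proof -
  show "\<forall>x \<le> length (wd a b c n). 0 \<le> Hc (wd a b c n) Black Red x"
  proof (intro allI impI)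
    fix x assume "x \<le> length (wd a b c n)"
    then obtain s u where su: "s < n" "u \<le> a s + b s + c s" "x = SS a b c s + u"
      using decomp_le[OF _ n] by (metis length_wd)
    have "min (Fl b c s) (Fl b c (Suc s)) \<le> Hc (wd a b c n) Black Red x"
      using Hu_lb[where a=a and b=b and c=c, OF su(1,2)] su(3) by simp
    moreover have "0 \<le> Fl b c s" "0 \<le> Fl b c (Suc s)" using nn su by auto
    ultimately show "0 \<le> Hc (wd a b c n) Black Red x" by simp
  qed
  have e: "length (wd a b c n) = SS a b c (n-1) + (a (n-1) + b (n-1) + c (n-1))"
    using n SS_Suc[of a b c "n-1"] by (simp add: length_wd)
  show "Hc (wd a b c n) Black Red (length (wd a b c n)) = 0"
    unfolding e using Hu_formula[of "n-1" n "a (n-1) + b (n-1) + c (n-1)" a b c] n z Fl_Suc[of b c "n-1"]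
    by simp
qed

lemma colour_at:
  assumes "s < n" "u < a s + b s + c s"
  shows "wd a b c n ! (SS a b c s + u) = (if u < a s then Blue else if u < a s + b s then Black else Red)"
  using nth_wd[where a=a and b=b and c=c, OF assms] nth_blk[where a=a and b=b and c=c, OF assms(2)] by simp

lemma Z_fwd:
  assumes l: "(d1, d3) \<in> M0 (wd a b c n) Blue Black" and up: "(d0, d2) \<in> M0 (wd a b c n) Black Red"
    and o: "d0 < d1" "d1 < d2" "d2 < d3"
  shows "\<exists>r t. r < t \<and> t < n \<and> Fl a b (Suc r) < Fl a b (Suc t) \<and>
           (\<forall>s. r \<le> s \<and> s < t \<longrightarrow> Fl b c (Suc t) < Fl b c (Suc s))"
proof -
  let ?cs = "wd a b c n"
  let ?HL = "Hc ?cs Blue Black"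
  let ?HU = "Hc ?cs Black Red"
  have la: "d1 < d3" "d3 < length ?cs" "?cs ! d1 = Blue" "?cs ! d3 = Black"
    using M0_arc[OF l] by auto
  have ua: "d0 < d2" "d2 < length ?cs" "?cs ! d0 = Black" "?cs ! d2 = Red"
    using M0_arc[OF up] by auto
  have lH: "\<forall>x. d1 < x \<and> x \<le> d3 \<longrightarrow> ?HL d1 < ?HL x" using l by (simp add: M0_iff)
  have uH: "\<forall>x. d0 < x \<and> x \<le> d2 \<longrightarrow> ?HU d0 < ?HU x" "?HU (Suc d2) = ?HU d0" using up by (simp_all add: M0_iff)
  have lens: "length ?cs = SS a b c n" by (rule length_wd)
  obtain r0 u0 where p0: "r0 < n" "u0 < a r0 + b r0 + c r0" "d0 = SS a b c r0 + u0"
    using decomp[of d0 a b c n] ua lens by auto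
  obtain r1 u1 where p1: "r1 < n" "u1 < a r1 + b r1 + c r1" "d1 = SS a b c r1 + u1"
    using decomp[of d1 a b c n] la o lens by auto
  obtain r2 u2 where p2: "r2 < n" "u2 < a r2 + b r2 + c r2" "d2 = SS a b c r2 + u2"
    using decomp[of d2 a b c n] ua lens by auto
  have c0: "a r0 \<le> u0" "u0 < a r0 + b r0" using colour_at[where a=a and b=b and c=c, OF p0(1,2)] p0(3) ua(3) by (auto split: if_splits)
  have c1: "u1 < a r1" using colour_at[where a=a and b=b and c=c, OF p1(1,2)] p1(3) la(3) by (auto split: if_splits)
  have c2: "a r2 + b r2 \<le> u2" using colour_at[where a=a and b=b and c=c, OF p2(1,2)] p2(3) ua(4) by (auto split: if_splits)
  have r01: "r0 < r1"
  proof (rule ccontr)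
    assume "\<not> r0 < r1"
    then have "r1 < r0 \<or> r1 = r0" by arith
    then show False
    proof
      assume "r1 < r0"
      then have "SS a b c (Suc r1) \<le> SS a b c r0" using SS_mono by simp
      then show False using SS_Suc[of a b c r1] p0 p1 o c1 by simp
    next
      assume "r1 = r0" then show False using p0 p1 o c0 c1 by simp
    qed
  qed
  have r12: "r1 \<le> r2"
  proof (rule ccontr)
    assume "\<not> r1 \<le> r2"
    then have "SS a b c (Suc r2) \<le> SS a b c r1" using SS_mono by simp
    then show False using SS_Suc[of a b c r2] p1 p2 o by simp
  qed
  have H1: "Fl a b r1 \<le> ?HL d1"
    using Hl_formula[of r1 n u1 a b c] p1 c1 by simp
  have H2: "?HL (Suc d2) = Fl a b (Suc r2)"
  proof -
    have "Suc d2 = SS a b c r2 + Suc u2" using p2 by simp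
    then show ?thesis using Hl_formula[of r2 n "Suc u2" a b c] p2 c2 Fl_Suc[of a b r2] by simp
  qed
  have "?HL d1 < ?HL (Suc d2)" using lH o by simp
  then have F: "Fl a b r1 < Fl a b (Suc r2)" using H1 H2 by simp
  define r where "r = r1 - 1"
  have rr: "Suc r = r1" using r01 r_def by simp
  have HU2: "Fl b c (Suc r2) \<le> ?HU (Suc d2)"
  proof -
    have "Suc d2 = SS a b c r2 + Suc u2" using p2 by simp
    then show ?thesis using Hu_formula[of r2 n "Suc u2" a b c] p2 c2 Fl_Suc[of b c r2] by simp
  qed
  have D: "Fl b c (Suc r2) < Fl b c (Suc s)" if s: "r \<le> s" "s < r2" for s
  proof -
    have sn: "Suc s < n" using s p2 by simp
    have x1: "d0 < SS a b c (Suc s)"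
    proof -
      have "SS a b c (Suc r0) \<le> SS a b c (Suc s)" using SS_mono s rr r01 by simp
      then show ?thesis using p0 SS_Suc[of a b c r0] by simp
    qed
    have x2: "SS a b c (Suc s) \<le> d2"
    proof -
      have "SS a b c (Suc s) \<le> SS a b c r2" using SS_mono s by simp
      then show ?thesis using p2 by simp
    qed
    have "?HU d0 < ?HU (SS a b c (Suc s))" using uH(1) x1 x2 by simp
    moreover have "?HU (SS a b c (Suc s)) = Fl b c (Suc s)"
      using Hu_formula[of "Suc s" n 0 a b c] sn by simp
    ultimately show ?thesis using HU2 uH(2) by simp
  qed
  show ?thesis
    apply (rule exI[of _ r], rule exI[of _ r2])
    using rr r12 p2 F D by auto
qed

lemma Z_bwd:
  assumes preL: "\<forall>x \<le> length (wd a b c n). 0 \<le> Hc (wd a b c n) Blue Black x"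
    and totL: "Hc (wd a b c n) Blue Black (length (wd a b c n)) = 0"
    and preU: "\<forall>x \<le> length (wd a b c n). 0 \<le> Hc (wd a b c n) Black Red x"
    and rt0: "r0 < t" "t < n" "Fl a b (Suc r0) < Fl a b (Suc t)"
    and D0: "\<forall>s. r0 \<le> s \<and> s < t \<longrightarrow> Fl b c (Suc t) < Fl b c (Suc s)"
  shows "\<exists>d0 d1 d2 d3. (d1, d3) \<in> M0 (wd a b c n) Blue Black \<and> (d0, d2) \<in> M0 (wd a b c n) Black Red \<and>
           d0 < d1 \<and> d1 < d2 \<and> d2 < d3"
proof -
  let ?cs = "wd a b c n"
  let ?HL = "Hc ?cs Blue Black"
  let ?HU = "Hc ?cs Black Red"
  let ?S = "SS a b c"
  define A where "A = {r'. r0 \<le> r' \<and> r' < t \<and> Fl a b (Suc r') < Fl a b (Suc t)}"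
  have finA: "finite A" unfolding A_def by (rule finite_subset[of _ "{..<t}"]) auto
  have r0A: "r0 \<in> A" using rt0 unfolding A_def by simp
  define r where "r = Max A"
  have rA: "r \<in> A" using Max_in[OF finA] r0A r_def by blast
  have rt: "r < t" "Fl a b (Suc r) < Fl a b (Suc t)" "r0 \<le> r" using rA unfolding A_def by auto
  have maxr: "Fl a b (Suc t) \<le> Fl a b (Suc s)" if s: "r < s" "s < t" for s
  proof (rule ccontr)
    assume "\<not> ?thesis"
    then have "s \<in> A" using s rt unfolding A_def by auto
    then have "s \<le> r" using Max_ge[OF finA] r_def by blast
    then show False using s by simp
  qed
  have D: "Fl b c (Suc t) < Fl b c (Suc s)" if "r \<le> s" "s < t" for s
    using D0 that rt by auto
  have tn: "t < n" by fact
  define R1 where "R1 = Suc r"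
  have R1t: "R1 \<le> t" using rt R1_def by simp
  have R1n: "R1 < n" using R1t tn by simp
  have FR1: "Fl a b (Suc t) \<le> Fl a b (Suc R1)"
    using maxr[of R1] R1_def R1t by (cases "R1 = t") auto
  have aR1: "Fl a b (Suc t) - Fl a b R1 \<le> int (a R1)"
    using FR1 Fl_Suc[of a b R1] by simp
  define u1 where "u1 = nat (Fl a b (Suc t) - 1 - Fl a b R1)"
  have u1a: "u1 < a R1" using aR1 rt R1_def u1_def by simp
  have u1v: "int u1 = Fl a b (Suc t) - 1 - Fl a b R1" using rt R1_def u1_def by simp
  define d1 where "d1 = ?S R1 + u1"
  have d1c: "?cs ! d1 = Blue" using colour_at[where a=a and b=b and c=c, OF R1n, of u1] u1a d1_def by simp
  have d1l: "d1 < length ?cs"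
  proof -
    have "?S (Suc R1) \<le> ?S n" using SS_mono R1n by simp
    then show ?thesis using SS_Suc[of a b c R1] d1_def u1a length_wd[of a b c n] by simp
  qed
  have Hd1: "?HL d1 = Fl a b (Suc t) - 1"
    using Hl_formula[of R1 n u1 a b c] R1n u1a d1_def u1v by simp
  have ft: "Fl b c (Suc t) < Fl b c t"
  proof -
    have "t = Suc (t - 1)" using rt by simp
    then show ?thesis using D[of "t-1"] rt by simp
  qed
  have ct: "1 \<le> c t" using ft Fl_Suc[of b c t] by simp
  define d2 where "d2 = ?S t + (a t + b t + c t - 1)"
  have d2c: "?cs ! d2 = Red" using colour_at[where a=a and b=b and c=c, OF tn, of "a t + b t + c t - 1"] ct d2_def by (simp, arith)
  have d2S: "Suc d2 = ?S (Suc t)" using d2_def ct SS_Suc[of a b c t] by simp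
  have d2l: "d2 < length ?cs"
  proof -
    have "?S (Suc t) \<le> ?S n" using SS_mono tn by simp
    then show ?thesis using d2S length_wd[of a b c n] by simp
  qed
  have HSt: "?HL (?S (Suc t)) = Fl a b (Suc t)" "?HU (?S (Suc t)) = Fl b c (Suc t)"
    using Hl_formula[of t n "a t + b t + c t" a b c] Hu_formula[of t n "a t + b t + c t" a b c] tn
      SS_Suc[of a b c t] Fl_Suc[of a b t] Fl_Suc[of b c t] by simp_all
  obtain d0 where d0: "(d0, d2) \<in> M0 ?cs Black Red"
    using M0_right[OF _ preU d2l d2c] by auto
  have Hd0: "?HU d0 = Fl b c (Suc t)" using d0 d2S HSt by (simp add: M0_iff)
  have d0d2: "d0 < d2" using d0 by (simp add: M0_iff)
  have HUbig: "Fl b c (Suc t) < ?HU x" if x: "?S R1 \<le> x" "x \<le> d2" for x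
  proof -
    have "x < ?S (Suc t)" using x d2S by simp
    then obtain s u where su: "s < Suc t" "u < a s + b s + c s" "x = ?S s + u"
      using decomp[of x a b c "Suc t"] by blast
    have sR: "R1 \<le> s" using row_ge[where a=a and b=b and c=c, OF su(3) su(2) x(1)] .
    have sn: "s < n" using su tn by simp
    show ?thesis
    proof (cases "s < t")
      case True
      have "min (Fl b c s) (Fl b c (Suc s)) \<le> ?HU x" using Hu_lb[where a=a and b=b and c=c, OF sn, of u] su by simp
      moreover have "Fl b c (Suc t) < Fl b c (Suc s)" using D[of s] True sR R1_def by simp
      moreover have "Fl b c (Suc t) < Fl b c s"
      proof -
        have s0: "0 < s" using sR R1_def by simp
        have "r \<le> s - 1" "s - 1 < t" using sR R1_def True by auto
        then have "Fl b c (Suc t) < Fl b c (Suc (s - 1))" using D by blast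
        then show ?thesis using s0 by simp
      qed
      ultimately show ?thesis by simp
    next
      case False
      then have st: "s = t" using su by simp
      have "?HU x = Fl b c t + int (min (u - a t) (b t)) - int (u - a t - b t)"
        using Hu_formula[of t n u a b c] tn su st by simp
      moreover have "u \<le> a t + b t + c t - 1" using su st by simp
      ultimately show ?thesis using ft Fl_Suc[of b c t] ct by (cases "u \<le> a t + b t") auto
    qed
  qed
  have d0d1: "d0 < d1"
  proof (rule ccontr)
    assume "\<not> d0 < d1"
    then have "?S R1 \<le> d0" using d1_def by simp
    then show False using HUbig[of d0] d0d2 Hd0 by simp
  qed
  obtain d3 where d3: "(d1, d3) \<in> M0 ?cs Blue Black"
    using M0_left[OF _ preL totL d1l d1c] by auto
  have HLbig: "Fl a b (Suc t) \<le> ?HL x" if x: "d1 < x" "x \<le> ?S (Suc t)" for x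
  proof (cases "x = ?S (Suc t)")
    case True then show ?thesis using HSt by simp
  next
    case False
    then have "x < ?S (Suc t)" using x by simp
    then obtain s u where su: "s < Suc t" "u < a s + b s + c s" "x = ?S s + u"
      using decomp[of x a b c "Suc t"] by blast
    have sR: "R1 \<le> s" using row_ge[where a=a and b=b and c=c, OF su(3) su(2)] x d1_def by simp
    have sn: "s < n" using su tn by simp
    show ?thesis
    proof (cases "s = R1")
      case True
      have uu: "u1 < u" using x su True d1_def by simp
      have "?HL x = Fl a b R1 + int (min u (a R1)) - int (min (u - a R1) (b R1))"
        using Hl_formula[of R1 n u a b c] R1n su True by simp
      then show ?thesis using uu u1v FR1 Fl_Suc[of a b R1] by (cases "u \<le> a R1") auto
    next
      case False
      then have sR': "R1 < s" using sR by simp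
      have "min (Fl a b s) (Fl a b (Suc s)) \<le> ?HL x" using Hl_lb[where a=a and b=b and c=c, OF sn, of u] su by simp
      moreover have "Fl a b (Suc t) \<le> Fl a b (Suc s)"
        using maxr[of s] sR' su R1_def by (cases "s = t") auto
      moreover have "Fl a b (Suc t) \<le> Fl a b s"
      proof -
        have s0: "0 < s" using sR' by simp
        have "r < s - 1" "s - 1 < t" using sR' su R1_def by auto
        then have "Fl a b (Suc t) \<le> Fl a b (Suc (s - 1))" using maxr by blast
        then show ?thesis using s0 by simp
      qed
      ultimately show ?thesis by simp
    qed
  qed
  have d2d3: "d2 < d3"
  proof (rule ccontr)
    assume "\<not> d2 < d3"
    then have a1: "Suc d3 \<le> ?S (Suc t)" using d2S by simp
    have "d1 < d3" using d3 by (simp add: M0_iff)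
    then have "Fl a b (Suc t) \<le> ?HL (Suc d3)" using HLbig[of "Suc d3"] a1 by simp
    moreover have "?HL (Suc d3) = ?HL d1" using d3 by (simp add: M0_iff)
    ultimately show False using Hd1 by simp
  qed
  have d1d2: "d1 < d2"
  proof (cases "R1 = t")
    case True then show ?thesis using d1_def d2_def u1a ct by simp
  next
    case False
    then have "?S (Suc R1) \<le> ?S t" using SS_mono R1t by simp
    then show ?thesis using d1_def d2_def u1a SS_Suc[of a b c R1] by simp
  qed
  show ?thesis using d0 d3 d0d1 d1d2 d2d3 by blast
qed


lemma ec_inj: "cntN w1 = cntN w2 \<Longrightarrow> (\<forall>r. ec w1 r = ec w2 r) \<Longrightarrow> w1 = w2"
proof (induction w1 arbitrary: w2)
  case Nil
  then show ?case
  proof (cases w2)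
    case (Cons x w) then show ?thesis using Nil by (cases x) (auto dest: spec[of _ 0])
  qed simp
next
  case (Cons x w1)
  show ?case
  proof (cases x)
    case E
    then have "ec w2 0 \<noteq> 0" using Cons.prems(2) by (metis ec.simps(2) nat.distinct(1))
    then obtain w2' where w2: "w2 = E # w2'"
    proof (cases w2)
      case (Cons z w) then show ?thesis using that \<open>ec w2 0 \<noteq> 0\<close> by (cases z) auto
    qed simp
    have "\<forall>r. ec w1 r = ec w2' r" using Cons.prems(2) E w2 by simp
    then show ?thesis using Cons.IH[of w2'] Cons.prems(1) E w2 by simp
  next
    case N
    then have c: "cntN w2 \<noteq> 0" using Cons.prems(1) by simp
    have "ec w2 0 = 0" using Cons.prems(2) N by (metis ec.simps(3) old.nat.simps(4))
    then obtain w2' where w2: "w2 = N # w2'"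
    proof (cases w2)
      case (Cons z w) then show ?thesis using that \<open>ec w2 0 = 0\<close> by (cases z) auto
    qed (use c in simp)
    have "\<forall>r. ec w1 r = ec w2' r"
    proof
      fix r show "ec w1 r = ec w2' r" using Cons.prems(2)[rule_format, of "Suc r"] N w2 by simp
    qed
    then show ?thesis using Cons.IH[of w2'] Cons.prems(1) N w2 by simp
  qed
qed

lemma tam_le_noZ:
  assumes "tam_le \<nu> x y"
  shows "\<not> Z2 (Fw \<nu> x) (Fw \<nu> y)"
proof -
  have "(tam_step \<nu>)\<^sup>*\<^sup>* x y" using assms by (simp add: tam_le_def)
  then show ?thesis
  proof (induction rule: converse_rtranclp_induct)
    case base then show ?case by (rule Z2_refl)
  next
    case (step x x')
    obtain y0 y' where "pushrel (Fw \<nu> x) y0 y' (Fw \<nu> x')" using tam_step_pushrel[OF step(1)] by blast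
    then show ?case using coreA step(3) by blast
  qed
qed

lemma build:
  assumes "\<not> Z2 (Fw \<nu> m) (Fw \<nu> u)" "above m \<nu>" "above u m"
  shows "tam_le \<nu> m u"
  using assms
proof (induction "\<Sum>r<cntN \<nu>. ec m r - ec u r" arbitrary: m rule: less_induct)
  case less
  have ab1: "\<forall>r. ec m r \<le> ec \<nu> r" and ep1: "endpt m = endpt \<nu>"
    using above_ec[THEN iffD1, OF less.prems(2)] by auto
  have ab2: "\<forall>r. ec u r \<le> ec m r" and ep2: "endpt u = endpt m"
    using above_ec[THEN iffD1, OF less.prems(3)] by auto
  have cN: "cntN m = cntN \<nu>" "cntN u = cntN m" "cntE m = cntE \<nu>" "cntE u = cntE m"
    using ep1 ep2 by (auto simp: endpt_def)
  show ?case
  proof (cases "\<forall>r. ec m r = ec u r")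
    case True
    have "cntN m = cntN u" using cN(2) by simp
    then have "m = u" using ec_inj[of m u] True by blast
    then show ?thesis unfolding tam_le_def by simp
  next
    case False
    define f where "f = Fw \<nu> m"
    define g where "g = Fw \<nu> u"
    have fg: "\<And>r. f r < g r \<longleftrightarrow> ec u r < ec m r" "\<And>r. f r \<le> g r"
      using ab2 by (auto simp: f_def g_def Fw_def)
    obtain r0 where r0: "ec m r0 \<noteq> ec u r0" using False by blast
    have "ec u r0 < ec m r0" using ab2[rule_format, of r0] r0 by simp
    then have ex: "\<exists>r. f r < g r" using fg(1) by blast
    define y0 where "y0 = (LEAST r. f r < g r)"
    have y0p: "f y0 < g y0" using LeastI_ex[OF ex] y0_def by simp
    have below: "f r = g r" if r: "r < y0" for r
    proof -
      have "\<not> f r < g r" using not_less_Least[of r "\<lambda>r. f r < g r"] r y0_def by blast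
      then show ?thesis using fg(2)[of r] by simp
    qed
    have y0j: "y0 < cntN m"
    proof (rule ccontr)
      assume "\<not> y0 < cntN m"
      then have "ec m y0 = cntE m" "ec u y0 = cntE u" using ec_full cN by auto
      then show False using y0p fg cN by simp
    qed
    have rowne: "(case y0 of 0 \<Rightarrow> 0 | Suc y'' \<Rightarrow> ec m y'') < ec m y0"
    proof (cases y0)
      case 0 then show ?thesis using y0p fg by simp
    next
      case (Suc y'')
      have "f y'' = g y''" using below Suc by simp
      then have "ec m y'' = ec u y''" by (simp add: f_def g_def Fw_def)
      moreover have "ec u y'' \<le> ec u y0" using ec_mono Suc by simp
      ultimately show ?thesis using Suc y0p fg by simp
    qed
    obtain m' y' where st: "tam_step \<nu> m m'" and pr: "pushrel f y0 y' (Fw \<nu> m')" and ep': "endpt m' = endpt m"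
      using construct_step[OF less.prems(2) y0j rowne] f_def by blast
    have cB: "(\<forall>r. Fw \<nu> m' r \<le> g r) \<and> \<not> Z2 (Fw \<nu> m') g"
      using coreB[of f g y0 y' "Fw \<nu> m'"] less.prems(1) below y0p fg(2) pr f_def g_def by blast
    have f'ge: "\<And>r. f r \<le> Fw \<nu> m' r" using pr unfolding pushrel_def by auto
    have ec1: "\<forall>r. ec u r \<le> ec m' r" using cB by (auto simp: g_def Fw_def)
    have ec2: "\<forall>r. ec m' r \<le> ec m r" using f'ge by (auto simp: f_def Fw_def)
    have "\<forall>r. ec m' r \<le> ec \<nu> r" using ec2 ab1 le_trans by blast
    then have abm': "above m' \<nu>" using ep' ep1 above_ec[of m' \<nu>] by simp
    have abu: "above u m'" using ec1 ep' ep2 above_ec[of u m'] by simp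
    have lt: "(\<Sum>r<cntN \<nu>. ec m' r - ec u r) < (\<Sum>r<cntN \<nu>. ec m r - ec u r)"
    proof (rule sum_strict_mono_ex1)
      show "finite {..<cntN \<nu>}" by simp
      show "\<forall>x\<in>{..<cntN \<nu>}. ec m' x - ec u x \<le> ec m x - ec u x" using ec2 by (simp add: diff_le_mono)
      have "Fw \<nu> m' y0 = f y0 + 1" using pr unfolding pushrel_def by auto
      then have "ec m' y0 < ec m y0" by (simp add: f_def Fw_def)
      moreover have "ec u y0 \<le> ec m' y0" using ec1 by blast
      ultimately have "ec m' y0 - ec u y0 < ec m y0 - ec u y0" by simp
      moreover have "y0 \<in> {..<cntN \<nu>}" using y0j cN by simp
      ultimately show "\<exists>a\<in>{..<cntN \<nu>}. ec m' a - ec u a < ec m a - ec u a" by blast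
    qed
    have "tam_le \<nu> m' u" using less.hyps[OF lt] cB abm' abu g_def by blast
    then show ?thesis using st unfolding tam_le_def by (simp add: converse_rtranclp_into_rtranclp)
  qed
qed


lemma Fl_east:
  "Fl (east_at x) (east_at y) (Suc s) = int (ec x s) - int (ec y s)"
proof -
  have "Fl (east_at x) (east_at y) (Suc s) = (\<Sum>r<Suc s. int (east_at x r) - int (east_at y r))"
    by (simp only: Fl_def)
  also have "\<dots> = (\<Sum>r<Suc s. int (east_at x r)) - (\<Sum>r<Suc s. int (east_at y r))"
    by (rule sum_subtractf)
  also have "\<dots> = int (\<Sum>r<Suc s. east_at x r) - int (\<Sum>r<Suc s. east_at y r)"
    by (simp only: of_nat_sum)
  also have "\<dots> = int (ec x s) - int (ec y s)" by (simp only: sum_east_at)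
  finally show ?thesis .
qed

lemma Fl_zero: "Fl a b 0 = 0" by (simp add: Fl_def)

lemma Z_translate:
  assumes cn: "cntN lo = j" "cntN mid = j" "cntN up = j" "cntE lo = i" "cntE mid = i" "cntE up = i"
    and ec1: "\<forall>r. ec up r \<le> ec mid r" and ec2: "\<forall>r. ec mid r \<le> ec lo r"
  shows "has_Z_pattern j lo mid up \<longleftrightarrow> Z2 (Fw lo mid) (Fw lo up)"
proof -
  define a where "a = east_at lo"
  define b where "b = east_at mid"
  define c where "c = east_at up"
  define n where "n = Suc j"
  have n0: "0 < n" by (simp add: n_def)
  have bk: "blk a b c = (\<lambda>r. replicate (a r) Blue @ replicate (b r) Black @ replicate (c r) Red)"
    by (rule ext) (simp add: blk_def)
  have dw: "dots j lo mid up = wd a b c n" unfolding dots_def wd_def bk by (simp add: a_def b_def c_def n_def)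
  have FL: "\<And>s. Fl a b (Suc s) = Fw lo mid s" by (simp add: a_def b_def Fl_east Fw_def)
  have FU: "\<And>s. Fl b c (Suc s) = Fw lo up s - Fw lo mid s" by (simp add: b_def c_def Fl_east Fw_def)
  have f0: "\<And>s. 0 \<le> Fw lo mid s" using ec2 by (simp add: Fw_def)
  have g0: "\<And>s. Fw lo mid s \<le> Fw lo up s" using ec1 by (simp add: Fw_def)
  have fj: "\<And>t. j \<le> t \<Longrightarrow> Fw lo mid t = 0" "\<And>t. j \<le> t \<Longrightarrow> Fw lo up t = 0"
    using cn by (simp_all add: Fw_def ec_full)
  have nnL: "\<forall>s \<le> n. 0 \<le> Fl a b s"
  proof (intro allI impI)
    fix s assume "s \<le> n" show "0 \<le> Fl a b s" using f0 FL by (cases s) (auto simp: Fl_zero)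
  qed
  have nnU: "\<forall>s \<le> n. 0 \<le> Fl b c s"
  proof (intro allI impI)
    fix s assume "s \<le> n" show "0 \<le> Fl b c s" using g0 FU by (cases s) (auto simp: Fl_zero)
  qed
  have zL: "Fl a b n = 0" using FL fj n_def by simp
  have zU: "Fl b c n = 0" using FU fj n_def by simp
  note pL = prefix_L[OF n0 nnL zL, of c]
  note pU = prefix_U[OF n0 nnU zU, of a]
  have low: "lower_arcs j lo mid up = M0 (wd a b c n) Blue Black"
    unfolding lower_arcs_def dw by (rule THE_M0) (use pL in auto)
  have upp: "upper_arcs j lo mid up = M0 (wd a b c n) Black Red"
    unfolding upper_arcs_def dw by (rule THE_M0) (use pU in auto)
  show ?thesis
  proof
    assume "has_Z_pattern j lo mid up"
    then obtain d0 d1 d2 d3 where d: "(d1, d3) \<in> M0 (wd a b c n) Blue Black" "(d0, d2) \<in> M0 (wd a b c n) Black Red"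
        "d0 < d1" "d1 < d2" "d2 < d3"
      unfolding has_Z_pattern_def low upp by blast
    obtain r t where rt: "r < t" "t < n" "Fl a b (Suc r) < Fl a b (Suc t)"
        "\<forall>s. r \<le> s \<and> s < t \<longrightarrow> Fl b c (Suc t) < Fl b c (Suc s)"
      using Z_fwd[OF d] by blast
    show "Z2 (Fw lo mid) (Fw lo up)"
    proof (rule Z2I[of r t])
      show "r < t" by fact
      show "Fw lo mid r < Fw lo mid t" using rt(3) FL by simp
      fix s assume "r \<le> s" "s < t"
      then show "Fw lo up t - Fw lo mid t < Fw lo up s - Fw lo mid s" using rt(4) FU by simp
    qed
  next
    assume "Z2 (Fw lo mid) (Fw lo up)"
    then obtain r t where rt: "r < t" "Fw lo mid r < Fw lo mid t"
        and D: "\<forall>s. r \<le> s \<and> s < t \<longrightarrow> Fw lo up t - Fw lo mid t < Fw lo up s - Fw lo mid s"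
      unfolding Z2_def by blast
    have tn: "t < n"
    proof (rule ccontr)
      assume "\<not> t < n"
      then have "Fw lo mid t = 0" using fj n_def by simp
      then show False using rt f0[of r] by simp
    qed
    have "\<exists>d0 d1 d2 d3. (d1, d3) \<in> M0 (wd a b c n) Blue Black \<and> (d0, d2) \<in> M0 (wd a b c n) Black Red \<and>
           d0 < d1 \<and> d1 < d2 \<and> d2 < d3"
    proof (rule Z_bwd[OF pL(1) pL(2) pU(1) rt(1) tn])
      show "Fl a b (Suc r) < Fl a b (Suc t)" using rt FL by simp
      show "\<forall>s. r \<le> s \<and> s < t \<longrightarrow> Fl b c (Suc t) < Fl b c (Suc s)" using D FU by simp
    qed
    then show "has_Z_pattern j lo mid up" unfolding has_Z_pattern_def low upp by blast
  qed
qed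

theorem lemma2:
  fixes i j :: nat and lo mid up :: walk
  assumes "(lo, mid, up) \<in> Rset i j"
  shows "(lo, mid, up) \<in> Gset i j \<longleftrightarrow> \<not> has_Z_pattern j lo mid up"
proof -
  have e: "endpt lo = (i, j)" "endpt mid = (i, j)" "endpt up = (i, j)"
    and a1: "above up mid" and a2: "above mid lo" using assms by (simp_all add: Rset_def)
  have ec1: "\<forall>r. ec up r \<le> ec mid r" using above_ec[THEN iffD1, OF a1] by blast
  have ec2: "\<forall>r. ec mid r \<le> ec lo r" using above_ec[THEN iffD1, OF a2] by blast
  have cn: "cntN lo = j" "cntN mid = j" "cntN up = j" "cntE lo = i" "cntE mid = i" "cntE up = i"
    using e by (simp_all add: endpt_def)
  have "\<forall>r. ec up r \<le> ec lo r" using ec1 ec2 le_trans by blast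
  then have a3: "above up lo" using above_ec[of up lo] e by simp
  have G: "(lo, mid, up) \<in> Gset i j \<longleftrightarrow> tam_le lo mid up"
    using e a2 a3 by (simp add: Gset_def Wset_def)
  have Z: "has_Z_pattern j lo mid up \<longleftrightarrow> Z2 (Fw lo mid) (Fw lo up)"
    by (rule Z_translate[OF cn ec1 ec2])
  show ?thesis
  proof
    assume "(lo, mid, up) \<in> Gset i j"
    then have "tam_le lo mid up" using G by simp
    then show "\<not> has_Z_pattern j lo mid up" using tam_le_noZ Z by blast
  next
    assume "\<not> has_Z_pattern j lo mid up"
    then have "\<not> Z2 (Fw lo mid) (Fw lo up)" using Z by simp
    then have "tam_le lo mid up" using build a2 a1 by blast
    then show "(lo, mid, up) \<in> Gset i j" using G by simp
  qed
qed


end
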